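(* Let $\{c_n\}_{n\in\mathbb Z}$ be complex numbers with $\{c_n\}_{n\ge0}\in NBVS$ and $\{c_n+c_{-n}\}_{n\ge0}\in NBVS$, and let $f(x)=\lim_{N\to\infty}\sum_{n=-N}^Nc_ne^{inx}$. Suppose $f\in C_{2\pi}$ (the limit exists for all $x$ and is continuous). Then there is a constant $K$ independent of $n$ such that for all $n\ge1$, $$\max_{k\ge1}k|c_{n+k}|\le KE_n(f)\quad\text{and}\quad\max_{k\ge1}k|c_{-n-k}|\le KE_n(f).$$
   Context: For $\theta_0\in[0,\pi/2)$ let $M(\theta_0)=\{z\in\mathbb C: |\arg z|\le\theta_0\}$ (with $0\in M(\theta_0)$). Write $\Delta c_n=c_n-c_{n+1}$. A complex sequence $\mathbf C=\{c_n\}$ belongs to $NBVS$ if there is $\theta_0\in[0,\pi/2)$ with $c_n\in M(\theta_0)$ for all $n\ge1$ and a constant $K(\mathbf C)>0$ such that $\sum_{n=m}^{2m}|\Delta c_n|\le K(\mathbf C)\big(|c_m|+|c_{2m}|\big)$ for all $m\ge1$. $C_{2\pi}$ is the space of continuous $2\pi$-periodic complex functions with $\|g\|=\max_x|g(x)|$; $E_n(f)$ is the best uniform approximation of $f$ by trigonometric polynomials $\sum_{k=-n}^na_ke^{ikx}$ of degree at most $n$. *)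

theory Defs
  imports "HOL-Analysis.Analysis"
begin

definition sector :: "real \<Rightarrow> complex set" where
  "sector \<theta>0 = {z. z = 0 \<or> \<bar>Arg z\<bar> \<le> \<theta>0}"

definition NBVS :: "(nat \<Rightarrow> complex) \<Rightarrow> bool" where
  "NBVS c \<longleftrightarrow>
     (\<exists>\<theta>0. 0 \<le> \<theta>0 \<and> \<theta>0 < pi / 2 \<and> (\<forall>n\<ge>1. c n \<in> sector \<theta>0)) \<and>
     (\<exists>K>0. \<forall>m\<ge>1. (\<Sum>n=m..2*m. cmod (c n - c (Suc n))) \<le> K * (cmod (c m) + cmod (c (2*m))))"

definition trig_poly :: "nat \<Rightarrow> (int \<Rightarrow> complex) \<Rightarrow> real \<Rightarrow> complex" where
  "trig_poly n a x = (\<Sum>k = -int n..int n. a k * exp (\<i> * of_int k * of_real x))"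

definition best_approx :: "nat \<Rightarrow> (real \<Rightarrow> complex) \<Rightarrow> real" where
  "best_approx n f = Inf {(SUP x. cmod (f x - trig_poly n a x)) | a. True}"

end

theory Submission
  imports Defs "HOL-Real_Asymp.Real_Asymp"
begin

lemma exp_2pi: "exp (\<i> * of_int j * of_real (2*pi)) = 1"
proof -
  have "exp (\<i> * of_int j * of_real (2*pi)) = exp ((2 * of_int j * pi) * \<i>)" by (simp add: algebra_simps)
  also have "\<dots> = 1" by (rule exp_integer_2pi) simp
  finally show ?thesis .
qed

lemma int_exp:
  "((\<lambda>x::real. exp (\<i> * of_int j * of_real x)) has_integral (if j = 0 then of_real (2*pi) else 0)) {0..2*pi}"
proof (cases "j = 0")
  case True then show ?thesis using has_integral_const_real[of "1::complex" 0 "2*pi"] by (simp add: scaleR_conv_of_real)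
next
  case False
  have "((\<lambda>x::real. exp (\<i> * of_int j * of_real x)) has_integral
     (exp (\<i> * of_int j * of_real (2*pi)) / (\<i> * of_int j) - exp (\<i> * of_int j * of_real 0) / (\<i> * of_int j))) {0..2*pi}"
    apply (rule fundamental_theorem_of_calculus)
     apply simp
    apply (rule has_vector_derivative_real_field)
    using False by (auto intro!: derivative_eq_intros)
  then show ?thesis using False by (simp only: exp_2pi) simp
qed


lemma sector_Re:
  assumes "z \<in> sector t" "0 \<le> t" "t < pi/2"
  shows "cos t * cmod z \<le> Re z"
proof (cases "z = 0")
  case True then show ?thesis by simp
next
  case False
  then have a: "\<bar>Arg z\<bar> \<le> t" using assms(1) by (auto simp: sector_def)
  have "cos t \<le> cos \<bar>Arg z\<bar>"
    using a assms by (intro cos_monotone_0_pi_le) auto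
  also have "cos \<bar>Arg z\<bar> = cos (Arg z)" by (simp add: abs_if)
  also have "\<dots> = Re z / cmod z" using False by (rule cos_Arg)
  finally show ?thesis using False by (simp add: field_simps)
qed

lemma sum_even_le:
  fixes g :: "nat \<Rightarrow> real"
  assumes "\<And>j. g j \<ge> 0"
  shows "(\<Sum>j<h. g (2*j)) \<le> (\<Sum>j<2*h. g j)"
proof (induction h)
  case 0 then show ?case by simp
next
  case (Suc h)
  have "(\<Sum>j<2*Suc h. g j) = (\<Sum>j<2*h. g j) + g (2*h) + g (Suc (2*h))"
    by (simp add: mult_2)
  then show ?case using Suc assms[of "Suc (2*h)"] by simp
qed

lemma nbvs_point:
  fixes e :: "nat \<Rightarrow> complex"
  assumes K: "\<forall>m\<ge>1. (\<Sum>n=m..2*m. cmod (e n - e (Suc n))) \<le> K * (cmod (e m) + cmod (e (2*m)))"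
    and M: "M \<ge> 1" "M \<le> m" "m \<le> 2*M"
  shows "cmod (e m) \<le> (K+1) * (cmod (e M) + cmod (e (2*M)))"
proof -
  have "(\<Sum>i=M..<m. e i - e (Suc i)) = - (\<Sum>i=M..<m. e (Suc i) - e i)"
    by (simp add: sum_subtractf)
  then have "e M - e m = (\<Sum>i=M..<m. e i - e (Suc i))"
    using sum_Suc_diff'[OF M(2), of e] by simp
  then have "cmod (e M - e m) \<le> (\<Sum>i=M..<m. cmod (e i - e (Suc i)))"
    by (simp add: sum_norm_le)
  also have "\<dots> \<le> (\<Sum>i=M..2*M. cmod (e i - e (Suc i)))"
    using M by (intro sum_mono2) auto
  also have "\<dots> \<le> K * (cmod (e M) + cmod (e (2*M)))" using K M by auto
  finally have 1: "cmod (e M - e m) \<le> K * (cmod (e M) + cmod (e (2*M)))" .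
  have "cmod (e m) \<le> cmod (e M) + cmod (e M - e m)"
    using norm_triangle_ineq2[of "e m" "e M"] norm_minus_commute[of "e m" "e M"] by linarith
  moreover have "(K+1)*(cmod (e M) + cmod (e (2*M))) = cmod (e M) + (K * cmod (e M) + K * cmod (e (2*M))) + cmod (e (2*M))"
    by (simp add: algebra_simps)
  moreover have "0 \<le> cmod (e (2*M))" by simp
  moreover have "K * (cmod (e M) + cmod (e (2*M))) = K * cmod (e M) + K * cmod (e (2*M))" by (simp add: distrib_left)
  ultimately show ?thesis using 1 by linarith
qed

lemma comb:
  fixes e :: "nat \<Rightarrow> complex"
  assumes "NBVS e"
  shows "\<exists>C\<ge>0. \<forall>n lam E. n \<ge> 1 \<longrightarrow>
     (\<forall>k p. k \<ge> 1 \<longrightarrow> p \<ge> n + k \<longrightarrow> cmod (\<Sum>a<k. \<Sum>b<k. e (p + a - b)) \<le> lam * real k * E) \<longrightarrow>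
     (\<forall>k\<ge>1. real k * cmod (e (n + k)) \<le> C * lam * E)"
proof -
  obtain t where t: "0 \<le> t" "t < pi/2" "\<And>n. n \<ge> 1 \<Longrightarrow> e n \<in> sector t"
    using assms unfolding NBVS_def by blast
  obtain K where K0: "K > 0" and K: "\<forall>m\<ge>1. (\<Sum>n=m..2*m. cmod (e n - e (Suc n))) \<le> K * (cmod (e m) + cmod (e (2*m)))"
    using assms unfolding NBVS_def by blast
  define co where "co = cos t"
  have co: "0 < co" "co \<le> 1" unfolding co_def using t by (auto intro!: cos_gt_zero_pi)
  define C where "C = 16 * (K+1) / co"
  have C1: "C \<ge> 1" unfolding C_def using co K0 by (simp add: field_simps)
  show ?thesis
  proof (intro exI[of _ C] conjI allI impI)
    show "C \<ge> 0" using C1 by simp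
    fix n :: nat and lam E :: real and k :: nat
    assume n: "n \<ge> 1"
      and H: "\<forall>k p. k \<ge> 1 \<longrightarrow> p \<ge> n + k \<longrightarrow> cmod (\<Sum>a<k. \<Sum>b<k. e (p + a - b)) \<le> lam * real k * E"
      and k: "k \<ge> 1"
    have H1: "cmod (e p) \<le> lam * E" if "p \<ge> n + 1" for p
      using H[rule_format, of 1 p] that by simp
    have lE: "0 \<le> lam * E" using H1[of "n+1"] by (auto intro: order.trans[OF norm_ge_zero])
    have win: "(\<Sum>j<h. cmod (e (p + j))) \<le> 2 * lam * E / co" if h: "h \<ge> 1" and p: "p \<ge> n + 2*h" for h p
    proof -
      have "co * (\<Sum>a<2*h. \<Sum>b<2*h. cmod (e (p + a - b))) = (\<Sum>a<2*h. \<Sum>b<2*h. co * cmod (e (p + a - b)))"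
        by (simp add: sum_distrib_left)
      also have "\<dots> \<le> (\<Sum>a<2*h. \<Sum>b<2*h. Re (e (p + a - b)))"
        unfolding co_def using p n by (intro sum_mono sector_Re t) auto
      also have "\<dots> = Re (\<Sum>a<2*h. \<Sum>b<2*h. e (p + a - b))" by simp
      also have "\<dots> \<le> cmod (\<Sum>a<2*h. \<Sum>b<2*h. e (p + a - b))" by (rule complex_Re_le_cmod)
      also have "\<dots> \<le> lam * real (2*h) * E" by (rule H[rule_format]) (use p h in auto)
      finally have A: "co * (\<Sum>a<2*h. \<Sum>b<2*h. cmod (e (p + a - b))) \<le> lam * real (2*h) * E" .
      have "real h * (\<Sum>j<h. cmod (e (p + j))) = (\<Sum>b<h. \<Sum>j<h. cmod (e (p + j)))" by simp
      also have "\<dots> \<le> (\<Sum>b<h. \<Sum>a<2*h. cmod (e (p + a - b)))"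
      proof (intro sum_mono)
        fix b assume b: "b \<in> {..<h}"
        have "(\<Sum>j<h. cmod (e (p + j))) = (\<Sum>a\<in>(\<lambda>j. j + b) ` {..<h}. cmod (e (p + a - b)))"
          by (subst sum.reindex) (auto simp: inj_on_def)
        also have "\<dots> \<le> (\<Sum>a<2*h. cmod (e (p + a - b)))"
          using b by (intro sum_mono2) auto
        finally show "(\<Sum>j<h. cmod (e (p + j))) \<le> (\<Sum>a<2*h. cmod (e (p + a - b)))" .
      qed
      also have "\<dots> \<le> (\<Sum>b<2*h. \<Sum>a<2*h. cmod (e (p + a - b)))"
        by (intro sum_mono2) (auto intro: sum_nonneg)
      also have "\<dots> = (\<Sum>a<2*h. \<Sum>b<2*h. cmod (e (p + a - b)))" by (rule sum.swap)
      finally have B: "real h * (\<Sum>j<h. cmod (e (p + j))) \<le> (\<Sum>a<2*h. \<Sum>b<2*h. cmod (e (p + a - b)))" .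
      have "co * (real h * (\<Sum>j<h. cmod (e (p + j)))) \<le> lam * real (2*h) * E"
        using A B co by (meson mult_left_mono less_imp_le order.trans)
      then have "real h * (co * (\<Sum>j<h. cmod (e (p + j)))) \<le> real h * (2 * lam * E)"
        by (simp add: algebra_simps)
      then have "co * (\<Sum>j<h. cmod (e (p + j))) \<le> 2 * lam * E" using h by simp
      then show ?thesis using co by (simp add: field_simps)
    qed
    show "real k * cmod (e (n + k)) \<le> C * lam * E"
    proof (cases "k = 1")
      case True
      then show ?thesis using H1[of "n+1"] C1 lE
        by simp (metis mult.assoc mult_le_cancel_right1 order.trans linorder_not_le order.strict_implies_order)
    next
      case False
      with k have k2: "k \<ge> 2" by simp
      define tt where "tt = (k - 2) div 3"
      define m where "m = n + k"
      have tt1: "3 * tt + 2 \<le> k" "k \<le> 4 * (tt + 1)" unfolding tt_def using k2 by auto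
      have "real (tt+1) * cmod (e m) = (\<Sum>j<tt+1. cmod (e m))" by simp
      also have "\<dots> \<le> (\<Sum>j<tt+1. (K+1) * (cmod (e (m - tt + j)) + cmod (e (2*(m - tt) + 2*j))))"
      proof (intro sum_mono)
        fix j assume j: "j \<in> {..<tt+1}"
        have "cmod (e m) \<le> (K+1) * (cmod (e (m - tt + j)) + cmod (e (2*(m - tt + j))))"
          using j tt1 unfolding m_def by (intro nbvs_point[OF K]) auto
        then show "cmod (e m) \<le> (K+1) * (cmod (e (m - tt + j)) + cmod (e (2*(m - tt) + 2*j)))"
          by (simp add: algebra_simps)
      qed
      also have "\<dots> = (K+1) * ((\<Sum>j<tt+1. cmod (e (m - tt + j))) + (\<Sum>j<tt+1. cmod (e (2*(m - tt) + 2*j))))"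
        by (simp only: sum.distrib[symmetric] sum_distrib_left)
      also have "\<dots> \<le> (K+1) * (2 * lam * E / co + 2 * lam * E / co)"
      proof (intro mult_left_mono add_mono)
        show "(\<Sum>j<tt+1. cmod (e (m - tt + j))) \<le> 2 * lam * E / co"
          using tt1 unfolding m_def by (intro win) auto
        have "(\<Sum>j<tt+1. cmod (e (2*(m - tt) + 2*j))) \<le> (\<Sum>j<2*(tt+1). cmod (e (2*(m - tt) + j)))"
          by (rule sum_even_le[where g = "\<lambda>j. cmod (e (2*(m - tt) + j))"]) simp
        also have "\<dots> \<le> 2 * lam * E / co"
          using tt1 unfolding m_def by (intro win) auto
        finally show "(\<Sum>j<tt+1. cmod (e (2*(m - tt) + 2*j))) \<le> 2 * lam * E / co" .
      qed (use K0 in auto)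
      also have "(K+1) * (2 * lam * E / co + 2 * lam * E / co) = (K+1) * (4 * lam * E / co)" by simp
      finally have A: "real (tt+1) * cmod (e m) \<le> (K+1) * (4 * lam * E / co)" .
      have "real k * cmod (e m) \<le> 4 * (real (tt+1) * cmod (e m))"
      proof -
        have "real k \<le> real (4*(tt+1))" using tt1(2) by (simp only: of_nat_le_iff)
        then have "real k \<le> 4 * real (tt+1)" by simp
        then have "real k * cmod (e m) \<le> (4 * real (tt+1)) * cmod (e m)" by (rule mult_right_mono) simp
        then show ?thesis by (simp only: mult.assoc)
      qed
      also have "\<dots> \<le> 4 * ((K+1) * (4 * lam * E / co))" using A by simp
      also have "\<dots> = C * lam * E" unfolding C_def by (simp add: field_simps)
      finally show ?thesis unfolding m_def .
    qed
  qed
qed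

lemma exp_ix_mult:
  "exp (\<i> * of_int l * of_real x) * exp (\<i> * of_int m * of_real x) = exp (\<i> * of_int (l + m) * of_real x)"
  by (simp add: exp_add[symmetric] algebra_simps)

lemma exp_ix_mult2:
  "z * exp (\<i> * of_int l * of_real x) * exp (\<i> * of_int (-m) * of_real x) = z * exp (\<i> * of_int (l - m) * of_real x)"
  by (simp only: mult.assoc[of z] exp_ix_mult diff_conv_add_uminus)

lemma cmod_exp_ix: "cmod (exp (\<i> * of_int l * of_real x)) = 1"
proof -
  have "\<i> * of_int l * of_real x = \<i> * complex_of_real (real_of_int l * x)" by simp
  then show ?thesis by (simp only:) (rule norm_exp_i_times)
qed

lemma cnj_exp_ix: "cnj (exp (\<i> * of_int l * of_real x)) = exp (\<i> * of_int (-l) * of_real x)"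
  by (simp add: exp_cnj)

lemma key2:
  fixes c :: "int \<Rightarrow> complex" and f :: "real \<Rightarrow> complex"
  assumes fourier: "\<And>j. ((\<lambda>x. f x * exp (\<i> * of_int (-j) * of_real x)) has_integral of_real (2*pi) * c j) {0..2*pi}"
    and cont: "continuous_on UNIV f" and bnd: "\<And>x. cmod (f x) \<le> Mf"
    and s: "s = 1 \<or> s = -1" and k: "k \<ge> 1" and p: "p \<ge> n + k"
  shows "cmod (\<Sum>a<k. \<Sum>b<k. c (s * (int p + int a - int b))) \<le> real k * best_approx n f"
proof -
  define J where "J a' b = s * (int p + int a' - int b)" for a' b :: nat
  have Jbig: "\<bar>J a' b\<bar> > int n" if "a' < k" "b < k" for a' b
    using s that p unfolding J_def by auto
  define \<Psi> where "\<Psi> x = (\<Sum>a'<k. \<Sum>b<k. exp (\<i> * of_int (-(J a' b)) * of_real x))" for x :: real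
  define Sc where "Sc = (\<Sum>a'<k. \<Sum>b<k. c (J a' b))"
  have I1: "((\<lambda>x. f x * \<Psi> x) has_integral of_real (2*pi) * Sc) {0..2*pi}"
    unfolding \<Psi>_def Sc_def sum_distrib_left
    by (intro has_integral_sum fourier) auto
  define G where "G x = (\<Sum>a'<k. \<Sum>b<k. exp (\<i> * of_int (s * (int b - int a')) * of_real x))" for x :: real
  have modPsi: "complex_of_real (cmod (\<Psi> x)) = G x" for x
  proof -
    define D where "D = (\<Sum>b<k. exp (\<i> * of_int (s * int b) * of_real x))"
    have cD: "cnj D = (\<Sum>a'<k. exp (\<i> * of_int (- (s * int a')) * of_real x))"
      unfolding D_def cnj_sum by (intro sum.cong refl) (simp only: cnj_exp_ix)
    define A where "A a' = exp (\<i> * of_int (- (s * int a')) * of_real x)" for a' :: nat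
    define B where "B b = exp (\<i> * of_int (s * int b) * of_real x)" for b :: nat
    define E0 where "E0 = exp (\<i> * of_int (- s * int p) * of_real x)"
    have pw: "exp (\<i> * of_int (-(J a' b)) * of_real x) = E0 * (A a' * B b)" for a' b
      unfolding E0_def A_def B_def
      by (simp only: exp_ix_mult) (rule arg_cong[where f = "\<lambda>m. exp (\<i> * of_int m * of_real x)"], simp add: J_def algebra_simps)
    have "\<Psi> x = (\<Sum>a'<k. \<Sum>b<k. E0 * (A a' * B b))" unfolding \<Psi>_def pw ..
    also have "\<dots> = E0 * ((\<Sum>a'<k. A a') * (\<Sum>b<k. B b))" unfolding sum_product by (simp only: sum_distrib_left)
    also have "\<dots> = E0 * (cnj D * D)" by (simp only: cD, simp only: D_def A_def B_def)
    finally have "\<Psi> x = E0 * (cnj D * D)" .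
    then have "cmod (\<Psi> x) = (cmod D)^2"
      by (simp add: norm_mult cmod_exp_ix power2_eq_square E0_def)
    then have "complex_of_real (cmod (\<Psi> x)) = D * cnj D" by (simp only: complex_norm_square)
    also have "\<dots> = (\<Sum>b<k. \<Sum>a'<k. B b * A a')" by (simp only: cD, simp only: D_def A_def B_def sum_product)
    also have "\<dots> = (\<Sum>a'<k. \<Sum>b<k. B b * A a')" by (rule sum.swap)
    also have "\<dots> = G x" unfolding G_def A_def B_def
      by (intro sum.cong refl, simp only: exp_ix_mult) (rule arg_cong[where f = "\<lambda>m. exp (\<i> * of_int m * of_real x)"], simp add: algebra_simps)
    finally show ?thesis .
  qed
  have IG: "(G has_integral of_real (2*pi) * of_nat k) {0..2*pi}"
  proof -
    have "(G has_integral (\<Sum>a'<k. \<Sum>b<k. if s * (int b - int a') = 0 then of_real (2*pi) else 0)) {0..2*pi}"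
      unfolding G_def by (intro has_integral_sum int_exp) auto
    also have "(\<Sum>a'<k. \<Sum>b<k. if s * (int b - int a') = 0 then complex_of_real (2*pi) else 0) = (\<Sum>a'<k. \<Sum>b<k. if b = a' then complex_of_real (2*pi) else 0)"
      using s by (intro sum.cong refl) auto
    also have "\<dots> = of_real (2*pi) * of_nat k"
      by (simp add: sum.delta)
    finally show ?thesis .
  qed
  have IPsi: "((\<lambda>x. cmod (\<Psi> x)) has_integral 2*pi*real k) {0..2*pi}"
  proof -
    have "((\<lambda>x. complex_of_real (cmod (\<Psi> x))) has_integral of_real (2*pi) * of_nat k) {0..2*pi}"
      using IG modPsi by simp
    from has_integral_linear[OF this bounded_linear_Re] show ?thesis by (simp add: o_def)
  qed
  have main: "cmod Sc \<le> real k * (SUP x. cmod (f x - trig_poly n a x))" for a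
  proof -
    define T where "T = trig_poly n a"
    have I2: "((\<lambda>x. T x * \<Psi> x) has_integral 0) {0..2*pi}"
    proof -
      have eq: "T x * \<Psi> x = (\<Sum>a'<k. \<Sum>b<k. \<Sum>l=-int n..int n. a l * exp (\<i> * of_int (l - J a' b) * of_real x))" for x
        unfolding T_def trig_poly_def \<Psi>_def sum_distrib_left sum_distrib_right
        by (intro sum.cong refl) (simp only: exp_ix_mult2)
      have hz: "((\<lambda>x. exp (\<i> * of_int (l - J a' b) * of_real x)) has_integral 0) {0..2 * pi}"
        if ab: "a' \<in> {..<k}" "b \<in> {..<k}" and l: "l \<in> {- int n..int n}" for a' b l
      proof -
        have "l - J a' b \<noteq> 0" using Jbig[of a' b] ab l by auto
        then show ?thesis using int_exp[of "l - J a' b"] by simp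
      qed
      have "((\<lambda>x. (\<Sum>a'<k. \<Sum>b<k. \<Sum>l=-int n..int n. a l * exp (\<i> * of_int (l - J a' b) * of_real x))) has_integral
             (\<Sum>a'<k. \<Sum>b<k. \<Sum>l=-int n..int n. a l * 0)) {0..2*pi}"
        by (intro has_integral_sum has_integral_mult_right hz) auto
      then show ?thesis by (simp add: eq)
    qed
    have Tb: "cmod (T x) \<le> (\<Sum>l=-int n..int n. cmod (a l))" for x
      unfolding T_def trig_poly_def
      by (rule order.trans[OF norm_sum]) (simp add: norm_mult cmod_exp_ix)
    have bdd: "bdd_above (range (\<lambda>x. cmod (f x - T x)))"
      by (rule bdd_aboveI[of _ "Mf + (\<Sum>l=-int n..int n. cmod (a l))"])
         (auto intro!: order.trans[OF norm_triangle_ineq4] add_mono bnd Tb)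
    define Ms where "Ms = (SUP x. cmod (f x - T x))"
    have Ms: "cmod (f x - T x) \<le> Ms" for x unfolding Ms_def by (rule cSUP_upper[OF _ bdd]) simp
    have I3: "((\<lambda>x. (f x - T x) * \<Psi> x) has_integral of_real (2*pi) * Sc) {0..2*pi}"
      using has_integral_diff[OF I1 I2] by (simp add: algebra_simps)
    have "cmod (integral {0..2*pi} (\<lambda>x. (f x - T x) * \<Psi> x)) \<le> integral {0..2*pi} (\<lambda>x. Ms * cmod (\<Psi> x))"
    proof (rule integral_norm_bound_integral)
      show "(\<lambda>x. (f x - T x) * \<Psi> x) integrable_on {0..2 * pi}" using I3 by blast
      show "(\<lambda>x. Ms * cmod (\<Psi> x)) integrable_on {0..2 * pi}" using has_integral_mult_right[OF IPsi] by blast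
      fix x show "cmod ((f x - T x) * \<Psi> x) \<le> Ms * cmod (\<Psi> x)"
        by (simp add: norm_mult mult_right_mono Ms)
    qed
    also have "integral {0..2*pi} (\<lambda>x. Ms * cmod (\<Psi> x)) = Ms * (2*pi*real k)"
      using has_integral_mult_right[OF IPsi] by blast
    finally have "cmod (of_real (2*pi) * Sc) \<le> Ms * (2*pi*real k)"
      using integral_unique[OF I3] by simp
    then have "2*pi * cmod Sc \<le> 2*pi * (real k * Ms)" by (simp add: norm_mult algebra_simps)
    then show ?thesis unfolding Ms_def T_def by simp
  qed
  have "cmod Sc / real k \<le> best_approx n f"
    unfolding best_approx_def
  proof (rule cInf_greatest)
    show "{(SUP x. cmod (f x - trig_poly n a x)) | a. True} \<noteq> {}" by blast
    fix y assume "y \<in> {(SUP x. cmod (f x - trig_poly n a x)) | a. True}"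
    then obtain a where "y = (SUP x. cmod (f x - trig_poly n a x))" by blast
    then show "cmod Sc / real k \<le> y" using main[of a] k by (simp add: field_simps)
  qed
  then show ?thesis using k unfolding Sc_def J_def by (simp add: field_simps)
qed

lemma sum_int_Suc:
  "(\<Sum>n = - int (Suc N)..int (Suc N). h n) = (\<Sum>n = - int N..int N. h n) + h (int (Suc N)) + h (- int (Suc N))"
proof -
  have "{- int (Suc N)..int (Suc N)} = insert (int (Suc N)) (insert (- int (Suc N)) {- int N..int N})"
    by auto
  then show ?thesis by (simp add: algebra_simps)
qed

lemma diff_exp_sin:
  "exp (\<i> * of_int n * of_real x) - exp (\<i> * of_int (-n) * of_real x) = 2 * \<i> * of_real (sin (of_int n * x))"
proof -
  have "complex_of_real (sin (of_int n * x)) = sin (complex_of_real (of_int n * x))" by (simp only: sin_of_real)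
  also have "\<dots> = (exp (\<i> * complex_of_real (of_int n * x)) - exp (-(\<i> * complex_of_real (of_int n * x)))) / (2*\<i>)"
    by (rule sin_exp_eq)
  finally show ?thesis by (simp add: field_simps)
qed

lemma sin_odd_half: "odd M \<Longrightarrow> \<bar>sin (real M * pi / 2)\<bar> = 1"
proof -
  assume "odd M"
  then obtain l where l: "M = 2*l + 1" by (metis oddE)
  have "real M * pi / 2 = real l * pi + pi/2" using l by (simp add: field_simps)
  then have "sin (real M * pi / 2) = sin (real l * pi + pi/2)" by (simp only:)
  also have "\<dots> = (-1)^l" by (simp add: sin_add)
  finally have "sin (real M * pi / 2) = (-1)^l" .
  then show ?thesis by simp
qed

lemma f_periodic:
  fixes c :: "int \<Rightarrow> complex" and f :: "real \<Rightarrow> complex"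
  assumes conv: "\<And>x. (\<lambda>N. \<Sum>n = - int N..int N. c n * exp (\<i> * of_int n * of_real x)) \<longlonglongrightarrow> f x"
  shows "f (x + 2 * pi * of_int m) = f x"
proof -
  have "exp (\<i> * of_int n * of_real (x + 2 * pi * of_int m)) = exp (\<i> * of_int n * of_real x)" for n
  proof -
    have "exp (\<i> * of_int n * of_real (x + 2 * pi * of_int m)) = exp (\<i> * of_int n * of_real x) * exp ((2 * of_int (n*m) * pi) * \<i>)"
      by (simp add: exp_add[symmetric] algebra_simps)
    also have "exp ((2 * of_int (n*m) * pi) * \<i>) = 1" by (rule exp_integer_2pi) simp
    finally show ?thesis by simp
  qed
  then have "(\<lambda>N. \<Sum>n = - int N..int N. c n * exp (\<i> * of_int n * of_real x)) \<longlonglongrightarrow> f (x + 2 * pi * of_int m)"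
    using conv[of "x + 2 * pi * of_int m"] by simp
  then show ?thesis using conv[of x] LIMSEQ_unique by blast
qed

lemma f_bounded:
  fixes c :: "int \<Rightarrow> complex" and f :: "real \<Rightarrow> complex"
  assumes conv: "\<And>x. (\<lambda>N. \<Sum>n = - int N..int N. c n * exp (\<i> * of_int n * of_real x)) \<longlonglongrightarrow> f x"
    and cont: "continuous_on UNIV f"
  shows "\<exists>M. \<forall>x. cmod (f x) \<le> M"
proof -
  have "compact (f ` {0..2*pi})"
    by (rule compact_continuous_image[OF continuous_on_subset[OF cont]]) auto
  then obtain M where M: "\<And>y. y \<in> {0..2*pi} \<Longrightarrow> cmod (f y) \<le> M"
    using compact_imp_bounded bounded_iff by (metis image_eqI)
  show ?thesis
  proof (intro exI allI)
    fix x :: real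
    define m where "m = \<lfloor>x / (2*pi)\<rfloor>"
    define y where "y = x - 2*pi * of_int m"
    have "of_int m \<le> x / (2*pi)" "x / (2*pi) < of_int m + 1" unfolding m_def by linarith+
    then have "2*pi * of_int m \<le> x" "x < 2*pi * of_int m + 2*pi" by (simp_all add: field_simps)
    then have y: "y \<in> {0..2*pi}" unfolding y_def by auto
    have "f x = f (y + 2*pi * of_int m)" unfolding y_def by simp
    also have "\<dots> = f y" by (rule f_periodic[OF conv])
    finally show "cmod (f x) \<le> M" using M[OF y] by simp
  qed
qed

lemma coef_bounded:
  fixes c :: "int \<Rightarrow> complex" and f :: "real \<Rightarrow> complex"
  assumes nb: "NBVS (\<lambda>n. c (int n))"
    and conv: "\<And>x. (\<lambda>N. \<Sum>n = - int N..int N. c n * exp (\<i> * of_int n * of_real x)) \<longlonglongrightarrow> f x"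
  shows "\<exists>B. \<forall>j. cmod (c j) \<le> B"
proof -
  obtain K where K0: "K > 0" and K: "\<forall>m\<ge>1. (\<Sum>n=m..2*m. cmod (c (int n) - c (int (Suc n)))) \<le> K * (cmod (c (int m)) + cmod (c (int (2*m))))"
    using nb unfolding NBVS_def by blast
  define t where "t x N = c (int (Suc N)) * exp (\<i> * of_int (int (Suc N)) * of_real x) + c (- int (Suc N)) * exp (\<i> * of_int (- int (Suc N)) * of_real x)" for x N
  have tconv: "convergent (t x)" for x
  proof -
    let ?S = "\<lambda>N. \<Sum>n = - int N..int N. c n * exp (\<i> * of_int n * of_real x)"
    have "t x = (\<lambda>N. ?S (Suc N) - ?S N)" by (rule ext) (simp only: t_def sum_int_Suc, simp)
    moreover have "(\<lambda>N. ?S (Suc N) - ?S N) \<longlonglongrightarrow> f x - f x"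
      by (intro tendsto_diff LIMSEQ_Suc conv)
    ultimately show ?thesis unfolding convergent_def by auto
  qed
  have tb: "\<exists>W. \<forall>N. cmod (t x N) \<le> W" for x
    using convergent_imp_Bseq[OF tconv[of x]] unfolding Bseq_def by blast
  obtain B0 where B0: "\<And>N. cmod (t 0 N) \<le> B0" using tb[of 0] by blast
  have t0: "t 0 N = c (int (Suc N)) + c (- int (Suc N))" for N unfolding t_def by simp
  have wb: "\<exists>W. \<forall>N. cmod (c (int (Suc N))) * (2 * \<bar>sin (real (Suc N) * x)\<bar>) \<le> W" for x
  proof -
    obtain Wx where Wx: "\<And>N. cmod (t x N) \<le> Wx" using tb[of x] by blast
    show ?thesis
    proof (intro exI allI)
      fix N
      have eq: "c (int (Suc N)) * (2 * \<i> * of_real (sin (of_int (int (Suc N)) * x))) = t x N - t 0 N * exp (\<i> * of_int (- int (Suc N)) * of_real x)"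
        unfolding diff_exp_sin[symmetric] t0 unfolding t_def by (simp add: algebra_simps)
      have "cmod (c (int (Suc N))) * (2 * \<bar>sin (real (Suc N) * x)\<bar>) = cmod (c (int (Suc N)) * (2 * \<i> * of_real (sin (of_int (int (Suc N)) * x))))"
        by (simp add: norm_mult)
      also have "\<dots> = cmod (t x N - t 0 N * exp (\<i> * of_int (- int (Suc N)) * of_real x))"
        by (simp only: eq)
      also have "\<dots> \<le> Wx + B0"
        by (rule order.trans[OF norm_triangle_ineq4]) (simp add: norm_mult cmod_exp_ix Wx B0 add_mono)
      finally show "cmod (c (int (Suc N))) * (2 * \<bar>sin (real (Suc N) * x)\<bar>) \<le> Wx + B0" .
    qed
  qed
  obtain W1 where W1: "\<And>N. cmod (c (int (Suc N))) * (2 * \<bar>sin (real (Suc N) * (pi/2))\<bar>) \<le> W1" using wb by blast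
  obtain W2 where W2: "\<And>N. cmod (c (int (Suc N))) * (2 * \<bar>sin (real (Suc N) * (pi/4))\<bar>) \<le> W2" using wb by blast
  have odd1: "cmod (c (int M)) \<le> W1/2" if "odd M" for M
  proof -
    from that obtain N where N: "M = Suc N" by (cases M) auto
    have "\<bar>sin (real (Suc N) * (pi/2))\<bar> = 1" using sin_odd_half[of M] that N by (simp add: field_simps)
    then show ?thesis using W1[of N] N by simp
  qed
  have odd2: "cmod (c (int (2*M))) \<le> W2/2" if "odd M" for M
  proof -
    from that obtain N where N: "2*M = Suc N" by (cases M) auto
    have "real (Suc N) = real (2*M)" by (simp only: N)
    then have "real (Suc N) = 2 * real M" by simp
    then have eq: "real (Suc N) * (pi/4) = real M * pi / 2" by simp
    have "\<bar>sin (real (Suc N) * (pi/4))\<bar> = 1" unfolding eq by (rule sin_odd_half[OF that])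
    then show ?thesis using W2[of N] N by simp
  qed
  define Bp where "Bp = (K+1) * (W1/2 + W2/2)"
  have pos: "cmod (c (int j)) \<le> Bp" if "j \<ge> 1" for j
  proof -
    define M where "M = (if odd j then j else j - 1)"
    have M: "odd M" "M \<ge> 1" "M \<le> j" "j \<le> 2*M" unfolding M_def using that by (auto elim: oddE evenE)
    have "cmod (c (int j)) \<le> (K+1) * (cmod (c (int M)) + cmod (c (int (2*M))))"
      using nbvs_point[where e = "\<lambda>n. c (int n)", OF K M(2-4)] by simp
    also have "\<dots> \<le> (K+1) * (W1/2 + W2/2)"
      using K0 odd1[OF M(1)] odd2[OF M(1)] by (intro mult_left_mono add_mono) auto
    finally show ?thesis unfolding Bp_def .
  qed
  have Bp0: "0 \<le> Bp" using pos[of 1] by (auto intro: order.trans[OF norm_ge_zero])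
  have B00: "0 \<le> B0" using B0[of 0] by (auto intro: order.trans[OF norm_ge_zero])
  show ?thesis
  proof (intro exI allI)
    fix j :: int
    consider "j = 0" | N where "j = int (Suc N)" | N where "j = - int (Suc N)"
    proof (cases j)
      case (nonneg n) then show ?thesis using that by (cases n) auto
    next
      case (neg n) then show ?thesis using that by auto
    qed
    then show "cmod (c j) \<le> cmod (c 0) + B0 + Bp"
    proof cases
      case 1 then show ?thesis using B00 Bp0 by simp
    next
      case (2 N) then have "cmod (c j) \<le> Bp" using pos[of "Suc N"] by simp
      with B00 norm_ge_zero[of "c 0"] show ?thesis by linarith
    next
      case (3 N)
      have "c j = t 0 N - c (int (Suc N))" using 3 t0[of N] by simp
      then have "cmod (c j) \<le> cmod (t 0 N) + cmod (c (int (Suc N)))" by (simp add: norm_triangle_ineq4)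
      then show ?thesis using B0[of N] pos[of "Suc N"] norm_ge_zero[of "c 0"] by linarith
    qed
  qed
qed

lemma sum_if_lt_le:
  fixes X :: "nat \<Rightarrow> real"
  assumes "\<And>n. X n \<ge> 0"
  shows "(\<Sum>n<N. if n < N0 then X n else 0) \<le> (\<Sum>n<N0. X n)"
proof -
  have "(\<Sum>n<N. if n < N0 then X n else 0) = (\<Sum>n\<in>{..<N} \<inter> {..<N0}. X n)"
    by (subst sum.inter_restrict) (auto intro!: sum.cong)
  also have "\<dots> \<le> (\<Sum>n<N0. X n)" using assms by (intro sum_mono2) auto
  finally show ?thesis .
qed

lemma toeplitz:
  fixes a :: "nat \<Rightarrow> complex" and v :: "real \<Rightarrow> nat \<Rightarrow> real" and Q :: "real \<Rightarrow> complex"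
  assumes A: "(\<lambda>N. \<Sum>n<Suc N. a n) \<longlonglongrightarrow> L"
    and v0: "\<And>h. v h 0 = 1"
    and vb: "\<And>h n. \<bar>v h n\<bar> \<le> 1"
    and tv: "\<And>h N. h \<noteq> 0 \<Longrightarrow> (\<Sum>n<N. \<bar>v h n - v h (Suc n)\<bar>) \<le> V"
    and vlim: "\<And>n. ((\<lambda>h. v h n) \<longlongrightarrow> 1) (at 0)"
    and Qs: "\<And>h. h \<noteq> 0 \<Longrightarrow> (\<lambda>n. a n * of_real (v h n)) sums Q h"
  shows "(Q \<longlongrightarrow> L) (at 0)"
proof (rule tendstoI)
  fix e :: real assume e: "e > 0"
  have V0: "0 \<le> V" using tv[of 1 0] by simp
  define d where "d = e / (V + 3)"
  have d: "d > 0" unfolding d_def using e V0 by simp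
  have de: "d * (V + 2) < e" unfolding d_def using e V0 by (simp add: field_simps)
  define Ap where "Ap N = (\<Sum>n<N. a n)" for N
  obtain N0 where N0: "\<And>n. n \<ge> N0 \<Longrightarrow> dist (Ap (Suc n)) L < d"
    using A d unfolding lim_sequentially Ap_def by blast
  define X where "X h = (\<Sum>n<N0. cmod (Ap (Suc n) - L) * \<bar>v h n - v h (Suc n)\<bar>)" for h
  have "(X \<longlongrightarrow> (\<Sum>n<N0. cmod (Ap (Suc n) - L) * \<bar>1 - 1\<bar>)) (at 0)"
    unfolding X_def by (intro tendsto_intros vlim)
  then have "(X \<longlongrightarrow> 0) (at 0)" by simp
  then have ev1: "\<forall>\<^sub>F h in at 0. X h < d" using d by (rule order_tendstoD(2))
  have ev2: "\<forall>\<^sub>F h in at (0::real). h \<noteq> 0" by (simp add: eventually_at_filter)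
  show "\<forall>\<^sub>F h in at 0. dist (Q h) L < e"
    using ev1 ev2
  proof eventually_elim
    case (elim h)
    have ident: "(\<Sum>n<N. a n * of_real (v h n)) - L = (Ap N - L) * of_real (v h N) + (\<Sum>n<N. (Ap (Suc n) - L) * of_real (v h n - v h (Suc n)))" for N
    proof (induction N)
      case 0 then show ?case by (simp add: Ap_def v0)
    next
      case (Suc N)
      have "(\<Sum>n<Suc N. a n * of_real (v h n)) - L = ((\<Sum>n<N. a n * of_real (v h n)) - L) + a N * of_real (v h N)" by simp
      also have "\<dots> = (Ap N - L) * of_real (v h N) + (\<Sum>n<N. (Ap (Suc n) - L) * of_real (v h n - v h (Suc n))) + a N * of_real (v h N)"
        by (simp only: Suc)
      also have "\<dots> = (Ap (Suc N) - L) * of_real (v h (Suc N)) + (\<Sum>n<Suc N. (Ap (Suc n) - L) * of_real (v h n - v h (Suc n)))"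
        by (simp add: Ap_def algebra_simps)
      finally show ?case .
    qed
    have bnd: "cmod ((\<Sum>n<N. a n * of_real (v h n)) - L) \<le> d + X h + d * V" if N: "N \<ge> Suc N0" for N
    proof -
      have 1: "cmod ((Ap N - L) * of_real (v h N)) \<le> d"
      proof -
        obtain M where M: "N = Suc M" "M \<ge> N0" using N by (cases N) auto
        have "cmod ((Ap N - L) * of_real (v h N)) = cmod (Ap N - L) * \<bar>v h N\<bar>" by (simp add: norm_mult)
        also have "\<dots> \<le> cmod (Ap N - L) * 1" by (intro mult_left_mono vb) simp
        also have "\<dots> \<le> d" using N0[OF M(2)] M(1) by (simp add: dist_norm less_imp_le)
        finally show ?thesis .
      qed
      have 2: "cmod (\<Sum>n<N. (Ap (Suc n) - L) * of_real (v h n - v h (Suc n))) \<le> X h + d * V"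
      proof -
        have "cmod (\<Sum>n<N. (Ap (Suc n) - L) * of_real (v h n - v h (Suc n))) \<le> (\<Sum>n<N. cmod (Ap (Suc n) - L) * \<bar>v h n - v h (Suc n)\<bar>)"
          by (rule order.trans[OF norm_sum]) (simp add: norm_mult del: of_real_diff)
        also have "\<dots> \<le> (\<Sum>n<N. (if n < N0 then cmod (Ap (Suc n) - L) * \<bar>v h n - v h (Suc n)\<bar> else 0) + d * \<bar>v h n - v h (Suc n)\<bar>)"
        proof (intro sum_mono)
          fix n assume "n \<in> {..<N}"
          show "cmod (Ap (Suc n) - L) * \<bar>v h n - v h (Suc n)\<bar> \<le> (if n < N0 then cmod (Ap (Suc n) - L) * \<bar>v h n - v h (Suc n)\<bar> else 0) + d * \<bar>v h n - v h (Suc n)\<bar>"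
          proof (cases "n < N0")
            case True then show ?thesis using d by simp
          next
            case False
            then have "cmod (Ap (Suc n) - L) \<le> d" using N0[of n] by (simp add: dist_norm)
            then show ?thesis using False by (simp add: mult_right_mono)
          qed
        qed
        also have "\<dots> = (\<Sum>n<N. if n < N0 then cmod (Ap (Suc n) - L) * \<bar>v h n - v h (Suc n)\<bar> else 0) + d * (\<Sum>n<N. \<bar>v h n - v h (Suc n)\<bar>)"
          by (simp add: sum.distrib sum_distrib_left)
        also have "\<dots> \<le> X h + d * V"
          unfolding X_def using d tv[OF elim(2)]
          by (intro add_mono sum_if_lt_le mult_left_mono) auto
        finally show ?thesis .
      qed
      show ?thesis unfolding ident
        by (rule order.trans[OF norm_triangle_ineq]) (use 1 2 in linarith)
    qed
    have "(\<lambda>N. cmod ((\<Sum>n<N. a n * of_real (v h n)) - L)) \<longlonglongrightarrow> cmod (Q h - L)"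
      using Qs[OF elim(2)] unfolding sums_def by (intro tendsto_intros)
    then have "cmod (Q h - L) \<le> d + X h + d * V"
      by (rule tendsto_upperbound) (auto simp: eventually_sequentially intro!: exI[of _ "Suc N0"] bnd)
    then show "dist (Q h) L < e" using elim(1) de by (simp add: dist_norm algebra_simps)
  qed
qed

definition uu :: "real \<Rightarrow> real" where "uu s = (if s = 0 then 1 else (2 - 2 * cos s) / s^2)"
definition uD :: "real \<Rightarrow> real" where "uD s = (2 * s * sin s - 4 + 4 * cos s) / s^3"

lemma uu_even: "uu (-s) = uu s" by (simp add: uu_def)

lemma uu_bounds: "0 \<le> uu s \<and> uu s \<le> 1"
proof (cases "s = 0")
  case True then show ?thesis by (simp add: uu_def)
next
  case False
  have c: "cos s = 1 - 2 * (sin (s/2))^2" using cos_double_sin[of "s/2"] by simp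
  have "(sin (s/2))^2 \<le> (s/2)^2"
    using abs_sin_x_le_abs_x[of "s/2"] by (metis abs_ge_zero power2_abs power_mono)
  then have "2 - 2 * cos s \<le> s^2" using c by (simp add: power2_eq_square field_simps)
  moreover have "0 \<le> 2 - 2 * cos s" by simp
  ultimately show ?thesis using False by (simp add: uu_def field_simps)
qed

lemma uu_lim: "(uu \<longlongrightarrow> 1) (at 0)"
proof -
  have "((\<lambda>s::real. (2 - 2 * cos s) / s^2) \<longlongrightarrow> 1) (at 0)" by real_asymp
  moreover have "\<forall>\<^sub>F s in at (0::real). (2 - 2 * cos s) / s^2 = uu s"
    by (simp add: eventually_at_filter uu_def)
  ultimately show ?thesis by (rule Lim_transform_eventually)
qed

lemma uu_lim_n: "((\<lambda>h. uu (real n * h)) \<longlongrightarrow> 1) (at 0)"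
proof -
  have "isCont uu 0" using uu_lim by (simp add: isCont_def uu_def)
  moreover have "((\<lambda>h. real n * h) \<longlongrightarrow> 0) (at (0::real))" by (auto intro!: tendsto_eq_intros)
  ultimately have "((\<lambda>h. uu (real n * h)) \<longlongrightarrow> uu 0) (at 0)" by (rule isCont_tendsto_compose)
  then show ?thesis by (simp add: uu_def)
qed

lemma uu_deriv:
  assumes s: "s > 0"
  shows "((\<lambda>s. (2 - 2 * cos s) / s^2) has_real_derivative uD s) (at s)"
proof -
  have n: "((\<lambda>s. 2 - 2 * cos s) has_real_derivative 2 * sin s) (at s)"
    by (auto intro!: derivative_eq_intros)
  have d: "((\<lambda>s. s^2) has_real_derivative 2 * s) (at s)"
    using DERIV_pow[of 2 s] by simp
  have "((\<lambda>s. (2 - 2 * cos s) / s^2) has_real_derivative (2 * sin s * s^2 - (2 - 2 * cos s) * (2 * s)) / (s^2 * s^2)) (at s)"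
    using DERIV_divide[OF n d] s by simp
  moreover have "(2 * sin s * s^2 - (2 - 2 * cos s) * (2 * s)) / (s^2 * s^2) = uD s"
  proof -
    have "2 * sin s * s^2 - (2 - 2 * cos s) * (2 * s) = s * (2 * s * sin s - 4 + 4 * cos s)"
      by (simp add: power2_eq_square algebra_simps)
    moreover have "s^2 * s^2 = s * s^3" by (simp add: power2_eq_square power3_eq_cube)
    ultimately show ?thesis unfolding uD_def using s by simp
  qed
  ultimately show ?thesis by simp
qed

lemma uD_bound:
  assumes s: "s > 0"
  shows "\<bar>uD s\<bar> \<le> 10" and "s \<ge> 1 \<Longrightarrow> \<bar>uD s\<bar> \<le> 10 / s^2"
proof -
  have big: "\<bar>uD s\<bar> \<le> 10 / s^2" if s1: "s \<ge> 1"
  proof -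
    have "\<bar>2 * s * sin s - 4 + 4 * cos s\<bar> \<le> 2 * s + 8"
    proof -
      have "\<bar>2 * s * sin s\<bar> = 2 * s * \<bar>sin s\<bar>" using s by (simp add: abs_mult)
      also have "\<dots> \<le> 2 * s * 1" using s abs_sin_le_one[of s] by (intro mult_left_mono) auto
      finally have 1: "\<bar>2 * s * sin s\<bar> \<le> 2 * s" by simp
      have 2: "\<bar>4 * cos s\<bar> \<le> 4" using abs_cos_le_one[of s] by (simp add: abs_mult)
      show ?thesis using 1 2 by arith
    qed
    also have "\<dots> \<le> 10 * s" using s1 by simp
    finally have "\<bar>2 * s * sin s - 4 + 4 * cos s\<bar> / s^3 \<le> 10 * s / s^3"
      using s by (intro divide_right_mono) auto
    also have "10 * s / s^3 = 10 / s^2" using s by (simp add: power2_eq_square power3_eq_cube)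
    finally show ?thesis unfolding uD_def using s by (simp add: abs_divide)
  qed
  show "s \<ge> 1 \<Longrightarrow> \<bar>uD s\<bar> \<le> 10 / s^2" by (rule big)
  show "\<bar>uD s\<bar> \<le> 10"
  proof (cases "s \<ge> 1")
    case True
    have "1 \<le> s^2" using True by (simp add: one_le_power)
    then have "10 / s^2 \<le> 10" by (simp add: divide_le_eq)
    then show ?thesis using big[OF True] by linarith
  next
    case False
    then have s1: "s < 1" by simp
    have sb: "\<bar>sin s - s\<bar> \<le> s^3 / 6"
      using Maclaurin_sin_bound[of s 3] s by (simp add: sin_coeff_def eval_nat_numeral fact_numeral)
    obtain t where t: "cos s = (\<Sum>m<4. cos_coeff m * s ^ m) + (cos (t + 1/2 * real 4 * pi) / fact 4) * s ^ 4"
      using Maclaurin_cos_expansion2[of s 4] s by auto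
    have cs: "\<bar>cos s - (1 - s^2/2)\<bar> \<le> s^4 / 24"
    proof -
      have "{..<4::nat} = {0,1,2,3}" by auto
      moreover have "cos_coeff 0 = 1" "cos_coeff 1 = 0" "cos_coeff 2 = -1/2" "cos_coeff 3 = 0"
        by (simp_all add: cos_coeff_def)
      ultimately have "(\<Sum>m<4. cos_coeff m * s ^ m) = 1 - s^2/2" by simp
      then have "cos s - (1 - s^2/2) = (cos (t + 1/2 * real 4 * pi) / fact 4) * s ^ 4" using t by simp
      moreover have "\<bar>(cos (t + 1/2 * real 4 * pi) / fact 4) * s ^ 4\<bar> \<le> s^4/24"
        using abs_cos_le_one[of "t + 1/2 * real 4 * pi"] s
        by (simp add: abs_mult fact_numeral)
      ultimately show ?thesis by simp
    qed
    have "2 * s * sin s - 4 + 4 * cos s = 2 * s * (sin s - s) + 4 * (cos s - (1 - s^2/2))"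
      by (simp add: algebra_simps power2_eq_square)
    then have "\<bar>2 * s * sin s - 4 + 4 * cos s\<bar> \<le> 2 * s * (s^3/6) + 4 * (s^4/24)"
    proof -
      have 1: "\<bar>2 * s * (sin s - s)\<bar> \<le> 2 * s * (s^3/6)"
        using sb s by (simp add: abs_mult mult_left_mono)
      have "\<bar>4 * (cos s - (1 - s^2/2))\<bar> = 4 * \<bar>cos s - (1 - s^2/2)\<bar>" by (simp only: abs_mult abs_numeral)
      then have 2: "\<bar>4 * (cos s - (1 - s^2/2))\<bar> \<le> 4 * (s^4/24)"
        by (simp only:) (rule mult_left_mono[OF cs], simp)
      show ?thesis unfolding \<open>2 * s * sin s - 4 + 4 * cos s = _\<close> using 1 2 by arith
    qed
    also have "\<dots> = s^4/2" by (simp add: power_def eval_nat_numeral field_simps)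
    also have "\<dots> \<le> s^3"
    proof -
      have "s^4 = s * s^3" by (simp add: eval_nat_numeral)
      also have "\<dots> \<le> 1 * s^3" using s1 s by (intro mult_right_mono) auto
      finally have "s^4 \<le> s^3" by simp
      moreover have "0 \<le> s^3" using s by simp
      ultimately show ?thesis by linarith
    qed
    finally have "\<bar>uD s\<bar> \<le> 1" unfolding uD_def using s by (simp add: abs_divide divide_le_eq_1)
    then show ?thesis by simp
  qed
qed

lemma uu_step:
  assumes h: "h > 0" and n: "n \<ge> 1"
  shows "\<bar>uu (real n * h) - uu (real (Suc n) * h)\<bar> \<le> 40 * (1 / (real (n - 1) * h + 1) - 1 / (real n * h + 1))"
proof -
  define a where "a = real n * h"
  define b where "b = real (Suc n) * h"
  have a: "a > 0" unfolding a_def using h n by simp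
  have ab: "a < b" "b - a = h" unfolding a_def b_def using h by (simp_all add: algebra_simps)
  have ua: "uu a = (2 - 2 * cos a) / a^2" and ub: "uu b = (2 - 2 * cos b) / b^2"
    using a ab by (auto simp: uu_def)
  obtain z where z: "a < z" "z < b" "(2 - 2 * cos b) / b^2 - (2 - 2 * cos a) / a^2 = (b - a) * uD z"
    using MVT2[OF ab(1), of "\<lambda>s. (2 - 2 * cos s) / s^2" uD] uu_deriv a by force
  have "uu a - uu b = - (h * uD z)" using z(3) ab ua ub by simp
  then have diff: "\<bar>uu a - uu b\<bar> = h * \<bar>uD z\<bar>" using h by (simp add: abs_mult)
  define m where "m = real (n - 1)"
  have m: "m = real n - 1" "m \<ge> 0" unfolding m_def using n by auto
  have e1: "a + 1 = m * h + 1 + h" unfolding a_def m(1) by (simp add: algebra_simps)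
  have "m * h \<ge> 0" using m(2) h by simp
  then have mh0: "m * h + 1 > 0" by linarith
  have psi0: "1 / (m * h + 1) - 1 / (a + 1) = h / ((m * h + 1) * (a + 1))"
    unfolding e1 using mh0 h by (simp add: field_simps)
  have psi: "1 / (real (n - 1) * h + 1) - 1 / (real n * h + 1) = h / ((m * h + 1) * (a + 1))"
    using psi0 unfolding a_def m_def .
  have pos: "0 < (m * h + 1) * (a + 1)" using mh0 a by simp
  have mh: "m * h + 1 \<le> a + 1" unfolding a_def using m h by (simp add: algebra_simps)
  show ?thesis
  proof (cases "a \<le> 1")
    case True
    have "(m * h + 1) * (a + 1) \<le> 2 * 2"
      using mh True m h a by (intro mult_mono) auto
    then have "h / 4 \<le> h / ((m * h + 1) * (a + 1))" using pos h by (intro divide_left_mono) auto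
    moreover have "h * \<bar>uD z\<bar> \<le> h * 10" using uD_bound(1)[of z] z a h by (intro mult_left_mono) auto
    ultimately show ?thesis unfolding psi using diff unfolding a_def b_def by simp
  next
    case False
    have "(m * h + 1) * (a + 1) \<le> (a + 1) * (a + 1)"
      using mh m h a by (intro mult_right_mono) auto
    also have "\<dots> \<le> (2 * a) * (2 * a)" using False by (intro mult_mono) auto
    finally have p4: "(m * h + 1) * (a + 1) \<le> 4 * a^2" by (simp add: power2_eq_square)
    have "h / (4 * a^2) \<le> h / ((m * h + 1) * (a + 1))" using pos h p4 a by (intro divide_left_mono) (auto intro!: mult_pos_pos)
    moreover have "\<bar>uD z\<bar> \<le> 10 / z^2" using uD_bound(2)[of z] z a False by auto
    moreover have "10 / z^2 \<le> 10 / a^2" using z a by (intro divide_left_mono power_mono) auto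
    ultimately have A: "h / (4 * a^2) \<le> h / ((m * h + 1) * (a + 1))" and BC: "\<bar>uD z\<bar> \<le> 10 / a^2" by auto
    have "h * \<bar>uD z\<bar> \<le> h * (10 / a^2)" using BC h by (intro mult_left_mono) auto
    also have "h * (10 / a^2) = 40 * (h / (4 * a^2))" by simp
    also have "\<dots> \<le> 40 * (h / ((m * h + 1) * (a + 1)))" using A by simp
    finally have "h * \<bar>uD z\<bar> \<le> 40 * (h / ((m * h + 1) * (a + 1)))" .
    then show ?thesis unfolding psi using diff unfolding a_def b_def by simp
  qed
qed

lemma uu_tv_pos:
  assumes h: "h > 0"
  shows "(\<Sum>n<N. \<bar>uu (real n * h) - uu (real (Suc n) * h)\<bar>) \<le> 41"
proof (cases N)
  case 0 then show ?thesis by simp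
next
  case (Suc M)
  define psi where "psi k = 1 / (real k * h + 1)" for k :: nat
  have "(\<Sum>n<N. \<bar>uu (real n * h) - uu (real (Suc n) * h)\<bar>) =
      \<bar>uu 0 - uu h\<bar> + (\<Sum>k<M. \<bar>uu (real (Suc k) * h) - uu (real (Suc (Suc k)) * h)\<bar>)"
    unfolding Suc by (subst sum.lessThan_Suc_shift) simp
  also have "\<dots> \<le> 1 + (\<Sum>k<M. 40 * (psi k - psi (Suc k)))"
  proof (intro add_mono sum_mono)
    show "\<bar>uu 0 - uu h\<bar> \<le> 1" using uu_bounds[of 0] uu_bounds[of h] by (simp add: uu_def)
    fix k assume "k \<in> {..<M}"
    show "\<bar>uu (real (Suc k) * h) - uu (real (Suc (Suc k)) * h)\<bar> \<le> 40 * (psi k - psi (Suc k))"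
      using uu_step[OF h, of "Suc k"] unfolding psi_def by simp
  qed
  also have "(\<Sum>k<M. 40 * (psi k - psi (Suc k))) = 40 * (psi 0 - psi M)"
    using sum_lessThan_telescope'[of "\<lambda>k. 40 * psi k" M] by (simp add: algebra_simps)
  also have "40 * (psi 0 - psi M) \<le> 40" unfolding psi_def using h by simp
  finally show ?thesis by simp
qed

lemma uu_tv:
  assumes h: "h \<noteq> 0"
  shows "(\<Sum>n<N. \<bar>uu (real n * h) - uu (real (Suc n) * h)\<bar>) \<le> 41"
proof (cases "h > 0")
  case True then show ?thesis by (rule uu_tv_pos)
next
  case False
  then have "-h > 0" using h by simp
  from uu_tv_pos[OF this, of N] show ?thesis
    by (simp add: uu_even)
qed

lemma schwarz_le:
  fixes H :: "real \<Rightarrow> real"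
  assumes ab: "a < b" and cont: "continuous_on {a..b} H" and Ha: "H a = 0" and Hb: "H b = 0"
    and q: "\<And>x. a < x \<Longrightarrow> x < b \<Longrightarrow> ((\<lambda>h. (H (x+h) + H (x-h) - 2 * H x) / h^2) \<longlongrightarrow> 0) (at 0)"
    and x0: "x0 \<in> {a..b}"
  shows "H x0 \<le> 0"
proof (rule ccontr)
  assume "\<not> H x0 \<le> 0" then have H0: "H x0 > 0" by simp
  define e where "e = H x0 / (2 * (b-a)^2)"
  have e: "e > 0" unfolding e_def using H0 ab by simp
  define K where "K y = H y + e * ((y - a) * (y - b))" for y
  have Kc: "continuous_on {a..b} K" unfolding K_def by (intro continuous_intros cont)
  obtain xm where xm: "xm \<in> {a..b}" "\<And>y. y \<in> {a..b} \<Longrightarrow> K y \<le> K xm"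
    using continuous_attains_sup[OF compact_Icc _ Kc] ab by fastforce
  have "(x0 - a) * (b - x0) \<le> (b - a) * (b - a)" using x0 by (intro mult_mono) auto
  then have "e * ((x0 - a) * (b - x0)) \<le> e * ((b - a) * (b - a))" using e by (intro mult_left_mono) auto
  also have "e * ((b - a) * (b - a)) = H x0 / 2"
  proof -
    have q: "(b-a)^2 \<noteq> 0" using ab by simp
    show ?thesis unfolding e_def power2_eq_square[symmetric] using q by simp
  qed
  finally have "K x0 \<ge> H x0 / 2" unfolding K_def by (simp add: algebra_simps)
  then have Kx0: "K x0 > 0" using H0 by simp
  then have Kxm: "K xm > 0" using xm(2)[OF x0] by simp
  have "xm \<noteq> a" "xm \<noteq> b" using Kxm Ha Hb by (auto simp: K_def)
  then have xm2: "a < xm" "xm < b" using xm(1) by auto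
  have "((\<lambda>h. (H (xm+h) + H (xm-h) - 2 * H xm) / h^2 + 2 * e) \<longlongrightarrow> 0 + 2 * e) (at 0)"
    by (intro tendsto_intros q xm2)
  moreover have "\<forall>\<^sub>F h in at (0::real). (H (xm+h) + H (xm-h) - 2 * H xm) / h^2 + 2 * e = (K (xm+h) + K (xm-h) - 2 * K xm) / h^2"
  proof -
    have "(H (xm+h) + H (xm-h) - 2 * H xm) / h^2 + 2 * e = (K (xm+h) + K (xm-h) - 2 * K xm) / h^2" if "h \<noteq> 0" for h
    proof -
      have "K (xm+h) + K (xm-h) - 2 * K xm = (H (xm+h) + H (xm-h) - 2 * H xm) + 2 * e * h^2"
        unfolding K_def by (simp add: algebra_simps power2_eq_square)
      then show ?thesis using that by (simp add: field_simps)
    qed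
    then show ?thesis by (simp add: eventually_at_filter)
  qed
  ultimately have lim: "((\<lambda>h. (K (xm+h) + K (xm-h) - 2 * K xm) / h^2) \<longlongrightarrow> 2 * e) (at 0)"
    by (simp add: Lim_transform_eventually)
  have ev: "\<forall>\<^sub>F h in at (0::real). (K (xm+h) + K (xm-h) - 2 * K xm) / h^2 \<le> 0"
  proof -
    define d where "d = min (xm - a) (b - xm)"
    have d: "d > 0" unfolding d_def using xm2 by simp
    have "(K (xm+h) + K (xm-h) - 2 * K xm) / h^2 \<le> 0" if "dist h 0 < d" for h
    proof -
      have "xm + h \<in> {a..b}" "xm - h \<in> {a..b}" using that unfolding d_def dist_real_def by auto
      then have "K (xm+h) \<le> K xm" "K (xm-h) \<le> K xm" using xm(2) by auto
      then have "K (xm+h) + K (xm-h) - 2 * K xm \<le> 0" by linarith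
      then show ?thesis by (simp add: divide_nonpos_nonneg)
    qed
    then show ?thesis using d unfolding eventually_at by blast
  qed
  have "2 * e \<le> 0" using tendsto_upperbound[OF lim ev] by simp
  then show False using e by simp
qed

lemma schwarz_affine_real:
  fixes G :: "real \<Rightarrow> real"
  assumes ab: "a < b" and cont: "continuous_on {a..b} G"
    and q: "\<And>x. a < x \<Longrightarrow> x < b \<Longrightarrow> ((\<lambda>h. (G (x+h) + G (x-h) - 2 * G x) / h^2) \<longlongrightarrow> 0) (at 0)"
    and x0: "x0 \<in> {a..b}"
  shows "G x0 = G a + (x0 - a) / (b - a) * (G b - G a)"
proof -
  define H where "H y = G y - (G a + (y - a) / (b - a) * (G b - G a))" for y
  have eqH: "H (x+h) + H (x-h) - 2 * H x = G (x+h) + G (x-h) - 2 * G x" for x h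
  proof -
    have "(x + h - a) / (b - a) + (x - h - a) / (b - a) = ((x + h - a) + (x - h - a)) / (b - a)"
      by (simp only: add_divide_distrib)
    also have "\<dots> = 2 * ((x - a) / (b - a))" by simp
    finally have "(x + h - a) / (b - a) * (G b - G a) + (x - h - a) / (b - a) * (G b - G a) = 2 * ((x - a) / (b - a) * (G b - G a))"
      by (metis distrib_right mult.assoc)
    then show ?thesis unfolding H_def by (simp add: algebra_simps)
  qed
  have Hc: "continuous_on {a..b} H" unfolding H_def using ab by (intro continuous_intros cont) auto
  have Ha: "H a = 0" and Hb: "H b = 0" unfolding H_def using ab by auto
  have qH: "((\<lambda>h. (H (x+h) + H (x-h) - 2 * H x) / h^2) \<longlongrightarrow> 0) (at 0)" if "a < x" "x < b" for x
    unfolding eqH using q[OF that] .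
  have "H x0 \<le> 0" by (rule schwarz_le[OF ab Hc Ha Hb qH x0])
  moreover have "(\<lambda>y. - H y) x0 \<le> 0"
  proof (rule schwarz_le[OF ab _ _ _ _ x0])
    show "continuous_on {a..b} (\<lambda>y. - H y)" by (intro continuous_intros Hc)
    show "- H a = 0" "- H b = 0" using Ha Hb by auto
    fix x assume "a < x" "x < b"
    from tendsto_minus[OF qH[OF this]]
    show "((\<lambda>h. (- H (x+h) + - H (x-h) - 2 * - H x) / h^2) \<longlongrightarrow> 0) (at 0)"
      by (simp add: algebra_simps minus_divide_left)
  qed
  ultimately have "H x0 = 0" by simp
  then show ?thesis unfolding H_def by simp
qed

lemma schwarz_affine:
  fixes G :: "real \<Rightarrow> complex"
  assumes ab: "a < b" and cont: "continuous_on {a..b} G"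
    and q: "\<And>x. a < x \<Longrightarrow> x < b \<Longrightarrow> ((\<lambda>h. (G (x+h) + G (x-h) - 2 * G x) / of_real (h^2)) \<longlongrightarrow> 0) (at 0)"
    and x0: "x0 \<in> {a..b}"
  shows "G x0 = G a + of_real ((x0 - a) / (b - a)) * (G b - G a)"
proof -
  have "(\<lambda>y. Re (G y)) x0 = (\<lambda>y. Re (G y)) a + (x0 - a) / (b - a) * ((\<lambda>y. Re (G y)) b - (\<lambda>y. Re (G y)) a)"
  proof (rule schwarz_affine_real[OF ab _ _ x0])
    show "continuous_on {a..b} (\<lambda>y. Re (G y))" by (intro continuous_intros cont)
    fix x assume "a < x" "x < b"
    from tendsto_Re[OF q[OF this]]
    show "((\<lambda>h. (Re (G (x+h)) + Re (G (x-h)) - 2 * Re (G x)) / h^2) \<longlongrightarrow> 0) (at 0)" by simp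
  qed
  moreover have "(\<lambda>y. Im (G y)) x0 = (\<lambda>y. Im (G y)) a + (x0 - a) / (b - a) * ((\<lambda>y. Im (G y)) b - (\<lambda>y. Im (G y)) a)"
  proof (rule schwarz_affine_real[OF ab _ _ x0])
    show "continuous_on {a..b} (\<lambda>y. Im (G y))" by (intro continuous_intros cont)
    fix x assume "a < x" "x < b"
    from tendsto_Im[OF q[OF this]]
    show "((\<lambda>h. (Im (G (x+h)) + Im (G (x-h)) - 2 * Im (G x)) / h^2) \<longlongrightarrow> 0) (at 0)" by simp
  qed
  ultimately show ?thesis by (intro complex_eqI) auto
qed

lemma second_diff_lim:
  fixes \<phi> \<phi>1 :: "real \<Rightarrow> complex"
  assumes d: "d > 0" and D1: "\<And>y. \<bar>y - x\<bar> < d \<Longrightarrow> (\<phi> has_vector_derivative \<phi>1 y) (at y)"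
    and D2: "(\<phi>1 has_vector_derivative g) (at x)"
  shows "((\<lambda>h. (\<phi> (x+h) + \<phi> (x-h) - 2 * \<phi> x) / of_real (h^2)) \<longlongrightarrow> g) (at 0)"
proof (rule tendstoI)
  fix e :: real assume e: "e > 0"
  obtain d2 where d2: "d2 > 0" and d2b: "\<And>y. norm (y - x) < d2 \<Longrightarrow> norm (\<phi>1 y - \<phi>1 x - (y - x) *\<^sub>R g) \<le> (e/4) * norm (y - x)"
  proof -
    have "(\<phi>1 has_derivative (\<lambda>t. t *\<^sub>R g)) (at x)" using D2 unfolding has_vector_derivative_def .
    then have A: "\<forall>ee>0. \<exists>dd>0. \<forall>y. norm (y - x) < dd \<longrightarrow> norm (\<phi>1 y - \<phi>1 x - (y - x) *\<^sub>R g) \<le> ee * norm (y - x)"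
      unfolding has_derivative_at_alt by blast
    have "e/4 > 0" using e by simp
    from A[rule_format, OF this] show ?thesis using that by blast
  qed
  define r where "r = min d d2"
  have r: "r > 0" unfolding r_def using d d2 by simp
  have "dist ((\<phi> (x+h) + \<phi> (x-h) - 2 * \<phi> x) / of_real (h^2)) g < e" if h: "h \<noteq> 0" "dist h 0 < r" for h
  proof -
    define k where "k s = \<phi> (x+s) + \<phi> (x-s) - 2 * \<phi> x - of_real s ^ 2 * g" for s :: real
    define k' where "k' s = \<phi>1 (x+s) - \<phi>1 (x-s) - 2 * of_real s * g" for s :: real
    have hr: "\<bar>h\<bar> < r" using h by simp
    have kd: "(k has_vector_derivative k' s) (at s within closed_segment 0 h)" if s: "s \<in> closed_segment 0 h" for s
    proof -
      have sh: "\<bar>s\<bar> \<le> \<bar>h\<bar>" using s by (auto simp: closed_segment_eq_real_ivl split: if_splits)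
      have p1: "((\<lambda>s. \<phi> (x+s)) has_vector_derivative \<phi>1 (x+s)) (at s)"
      proof -
        have "((\<lambda>s. x + s) has_vector_derivative 1) (at s)" by (auto intro!: derivative_eq_intros)
        moreover have "(\<phi> has_vector_derivative \<phi>1 (x+s)) (at (x+s))" using D1 sh hr unfolding r_def by auto
        ultimately show ?thesis using vector_diff_chain_at[of "\<lambda>s. x + s" 1 s \<phi>] by (simp add: o_def)
      qed
      have p2: "((\<lambda>s. \<phi> (x-s)) has_vector_derivative - \<phi>1 (x-s)) (at s)"
      proof -
        have "((\<lambda>s. x - s) has_vector_derivative -1) (at s)" by (auto intro!: derivative_eq_intros)
        moreover have "(\<phi> has_vector_derivative \<phi>1 (x-s)) (at (x-s))" using D1 sh hr unfolding r_def by auto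
        ultimately show ?thesis using vector_diff_chain_at[of "\<lambda>s. x - s" "-1" s \<phi>] by (simp add: o_def)
      qed
      have p3: "((\<lambda>s. of_real s ^ 2 * g) has_vector_derivative 2 * of_real s * g) (at s)"
        by (rule has_vector_derivative_real_field) (auto intro!: derivative_eq_intros)
      have "(k has_vector_derivative (\<phi>1 (x+s) + - \<phi>1 (x-s) - 0 - 2 * of_real s * g)) (at s)"
        unfolding k_def by (intro has_vector_derivative_diff has_vector_derivative_add p1 p2 p3 has_vector_derivative_const)
      moreover have "\<phi>1 (x+s) + - \<phi>1 (x-s) - 0 - 2 * of_real s * g = k' s" unfolding k'_def by simp
      ultimately show ?thesis by (metis has_vector_derivative_at_within)
    qed
    have kb: "norm (k' s - k' 0) \<le> (e/2) * \<bar>h\<bar>" if s: "s \<in> closed_segment 0 h" for s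
    proof -
      have sh: "\<bar>s\<bar> \<le> \<bar>h\<bar>" using s by (auto simp: closed_segment_eq_real_ivl split: if_splits)
      have 1: "norm (\<phi>1 (x+s) - \<phi>1 x - s *\<^sub>R g) \<le> (e/4) * \<bar>s\<bar>" using d2b[of "x+s"] sh hr unfolding r_def by auto
      have 2: "norm (\<phi>1 (x-s) - \<phi>1 x - (-s) *\<^sub>R g) \<le> (e/4) * \<bar>s\<bar>" using d2b[of "x-s"] sh hr unfolding r_def by auto
      have eq: "k' s - k' 0 = (\<phi>1 (x+s) - \<phi>1 x - s *\<^sub>R g) - (\<phi>1 (x-s) - \<phi>1 x - (-s) *\<^sub>R g)"
        unfolding k'_def by (simp add: scaleR_conv_of_real algebra_simps)
      have "norm (k' s - k' 0) \<le> norm (\<phi>1 (x+s) - \<phi>1 x - s *\<^sub>R g) + norm (\<phi>1 (x-s) - \<phi>1 x - (-s) *\<^sub>R g)"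
        unfolding eq by (rule norm_triangle_ineq4)
      then have "norm (k' s - k' 0) \<le> (e/4) * \<bar>s\<bar> + (e/4) * \<bar>s\<bar>"
        using 1 2 by linarith
      also have "\<dots> \<le> (e/2) * \<bar>h\<bar>" using sh e by simp
      finally show ?thesis .
    qed
    have "norm (k h - k 0 - (h - 0) *\<^sub>R k' 0) \<le> norm (h - 0) * ((e/2) * \<bar>h\<bar>)"
      by (rule vector_differentiable_bound_linearization[OF kd _ kb]) auto
    moreover have "k 0 = 0" "k' 0 = 0" by (simp_all add: k_def k'_def)
    ultimately have "norm (k h) \<le> \<bar>h\<bar> * ((e/2) * \<bar>h\<bar>)" by simp
    also have "\<bar>h\<bar> * ((e/2) * \<bar>h\<bar>) = (e/2) * (\<bar>h\<bar> * \<bar>h\<bar>)" by (simp only: mult_ac)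
    also have "\<bar>h\<bar> * \<bar>h\<bar> = h^2" by (metis power2_abs power2_eq_square)
    finally have kh: "norm (k h) \<le> (e/2) * h^2" .
    have "(\<phi> (x+h) + \<phi> (x-h) - 2 * \<phi> x) / of_real (h^2) - g = k h / of_real (h^2)"
      unfolding k_def using h by (simp add: field_simps)
    then have "dist ((\<phi> (x+h) + \<phi> (x-h) - 2 * \<phi> x) / of_real (h^2)) g = norm (k h) / h^2"
      by (simp add: dist_norm norm_divide norm_power)
    also have "\<dots> \<le> e/2" using kh h by (simp add: divide_le_eq)
    also have "\<dots> < e" using e by simp
    finally show ?thesis .
  qed
  then show "\<forall>\<^sub>F h in at 0. dist ((\<phi> (x+h) + \<phi> (x-h) - 2 * \<phi> x) / of_real (h^2)) g < e"
    using r unfolding eventually_at by blast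
qed

definition ttf :: "(int \<Rightarrow> complex) \<Rightarrow> real \<Rightarrow> nat \<Rightarrow> complex" where
  "ttf c y n = c (int n) * exp (\<i> * of_int (int n) * of_real y) + c (- int n) * exp (\<i> * of_int (- int n) * of_real y)"
definition tau :: "(int \<Rightarrow> complex) \<Rightarrow> nat \<Rightarrow> real \<Rightarrow> complex" where
  "tau c n y = (if n = 0 then 0 else ttf c y n / of_nat (n^2))"
definition Ps :: "(int \<Rightarrow> complex) \<Rightarrow> real \<Rightarrow> complex" where
  "Ps c y = (\<Sum>n. tau c n y)"
definition FF :: "(int \<Rightarrow> complex) \<Rightarrow> real \<Rightarrow> complex" where
  "FF c y = c 0 * of_real (y^2) / 2 - Ps c y"

lemma exp_ix_shift: "exp (\<i> * of_int n * of_real (y + t)) = exp (\<i> * of_int n * of_real y) * exp (\<i> * of_int n * of_real t)"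
  by (simp add: exp_add[symmetric] algebra_simps)

lemma exp_ix_per: "exp (\<i> * of_int n * of_real (y + 2 * pi)) = exp (\<i> * of_int n * of_real y)"
  by (simp only: exp_ix_shift exp_2pi) simp

lemma tau_bound:
  assumes B: "\<And>j. cmod (c j) \<le> B"
  shows "cmod (tau c n y) \<le> 2 * B / real n ^ 2"
proof (cases "n = 0")
  case True then show ?thesis by (simp add: tau_def)
next
  case False
  have "cmod (ttf c y n) \<le> B + B"
    unfolding ttf_def by (rule order.trans[OF norm_triangle_ineq]) (intro add_mono, simp_all add: norm_mult cmod_exp_ix B)
  then show ?thesis using False by (simp add: tau_def norm_divide norm_power divide_right_mono)
qed

lemma summable_M: "summable (\<lambda>n. 2 * B / real n ^ 2)"
proof -
  have "summable (\<lambda>n. inverse (real n ^ 2))" by (rule inverse_power_summable) simp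
  then have "summable (\<lambda>n. (2 * B) * inverse (real n ^ 2))" by (rule summable_mult)
  then show ?thesis by (simp add: divide_inverse)
qed

lemma tau_cont: "continuous_on UNIV (tau c n)"
  unfolding tau_def ttf_def by (cases "n = 0") (auto intro!: continuous_intros)

lemma Ps_unif:
  assumes B: "\<And>j. cmod (c j) \<le> B"
  shows "uniform_limit UNIV (\<lambda>N y. \<Sum>n<N. tau c n y) (Ps c) sequentially"
  unfolding Ps_def by (rule Weierstrass_m_test[OF tau_bound[OF B] summable_M])

lemma Ps_cont:
  assumes B: "\<And>j. cmod (c j) \<le> B"
  shows "continuous_on UNIV (Ps c)"
  by (rule uniform_limit_theorem[OF _ Ps_unif[OF B]]) (auto intro!: always_eventually continuous_on_sum tau_cont)

lemma Ps_sums: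
  assumes B: "\<And>j. cmod (c j) \<le> B"
  shows "(\<lambda>n. tau c n y) sums Ps c y"
proof -
  have "summable (\<lambda>n. tau c n y)"
    by (rule summable_norm_cancel, rule summable_comparison_test[OF _ summable_M[of B]]) (auto intro: tau_bound[OF B])
  then show ?thesis unfolding Ps_def by (rule summable_sums)
qed

lemma Ps_per:
  assumes B: "\<And>j. cmod (c j) \<le> B"
  shows "Ps c (y + 2 * pi) = Ps c y"
proof -
  have "tau c n (y + 2 * pi) = tau c n y" for n unfolding tau_def ttf_def by (simp only: exp_ix_per)
  then show ?thesis unfolding Ps_def by simp
qed

lemma partial_sum_gen:
  "(\<Sum>n<Suc N. (if n = 0 then g 0 else g (int n) + g (- int n))) = (\<Sum>n = - int N..int N. g n)"
proof (induction N)
  case 0 then show ?case by simp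
next
  case (Suc N)
  have "(\<Sum>n<Suc (Suc N). (if n = 0 then g 0 else g (int n) + g (- int n))) = (\<Sum>n<Suc N. (if n = 0 then g 0 else g (int n) + g (- int n))) + (g (int (Suc N)) + g (- int (Suc N)))"
    by simp
  also have "\<dots> = (\<Sum>n = - int (Suc N)..int (Suc N). g n)"
    unfolding Suc sum_int_Suc by (simp add: algebra_simps)
  finally show ?case .
qed

lemma partial_sum_eq:
  "(\<Sum>n<Suc N. (if n = 0 then c 0 else ttf c x n)) = (\<Sum>n = - int N..int N. c n * exp (\<i> * of_int n * of_real x))"
proof -
  have "(\<Sum>n<Suc N. (if n = 0 then c 0 else ttf c x n)) = (\<Sum>n<Suc N. (if n = 0 then c 0 * exp (\<i> * of_int 0 * of_real x) else ttf c x n))"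
    by (intro sum.cong refl) simp
  also have "\<dots> = (\<Sum>n = - int N..int N. c n * exp (\<i> * of_int n * of_real x))"
    unfolding ttf_def by (rule partial_sum_gen)
  finally show ?thesis .
qed

lemma tau_second_diff:
  "tau c n (x+h) + tau c n (x-h) - 2 * tau c n x = - (if n = 0 then 0 else ttf c x n * of_real (uu (real n * h)) * of_real (h^2))"
proof (cases "n = 0")
  case True then show ?thesis by (simp add: tau_def)
next
  case False
  define t where "t = real n * h"
  define E where "E = exp (\<i> * of_int (int n) * of_real h)"
  define E' where "E' = exp (\<i> * of_int (- int n) * of_real h)"
  have Et: "E = exp (\<i> * of_real t)" "E' = exp (-(\<i> * of_real t))" unfolding E_def E'_def t_def by (simp_all add: mult.assoc)
  have EE: "E + E' = of_real (2 * cos t)"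
  proof -
    have "complex_of_real (2 * cos t) = 2 * cos (complex_of_real t)" by (simp only: of_real_mult cos_of_real) simp
    also have "\<dots> = exp (\<i> * complex_of_real t) + exp (-(\<i> * complex_of_real t))"
      by (simp add: cos_exp_eq)
    finally show ?thesis unfolding Et by simp
  qed
  have ut: "2 - 2 * cos t = uu t * h^2 * (real n)^2"
  proof (cases "h = 0")
    case True then show ?thesis by (simp add: t_def)
  next
    case h: False
    then have "t \<noteq> 0" using False unfolding t_def by simp
    then show ?thesis using h False unfolding uu_def t_def by (simp add: power_mult_distrib field_simps)
  qed
  have B: "E + E' - 2 = - of_real (uu t * h^2 * (real n)^2)"
    unfolding EE ut[symmetric] by simp
  have pm: "exp (\<i> * of_int k * of_real (x - h)) = exp (\<i> * of_int k * of_real x) * exp (\<i> * of_int (-k) * of_real h)" for k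
    using exp_ix_shift[of k x "-h"] by simp
  have A: "ttf c (x+h) n + ttf c (x-h) n - 2 * ttf c x n = ttf c x n * (E + E' - 2)"
    unfolding ttf_def exp_ix_shift pm E_def E'_def by (simp add: algebra_simps)
  have "tau c n (x+h) + tau c n (x-h) - 2 * tau c n x = (ttf c (x+h) n + ttf c (x-h) n - 2 * ttf c x n) / of_nat (n^2)"
    using False by (simp add: tau_def field_simps)
  also have "\<dots> = - (ttf c x n * of_real (uu t) * of_real (h^2))"
    unfolding A B using False by (simp add: field_simps)
  finally show ?thesis using False unfolding t_def by simp
qed

lemma riemann:
  assumes B: "\<And>j. cmod (c j) \<le> B"
    and conv: "\<And>x. (\<lambda>N. \<Sum>n = - int N..int N. c n * exp (\<i> * of_int n * of_real x)) \<longlonglongrightarrow> f x"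
  shows "((\<lambda>h. (FF c (x+h) + FF c (x-h) - 2 * FF c x) / of_real (h^2)) \<longlongrightarrow> f x) (at 0)"
proof (rule toeplitz[where a = "\<lambda>n. if n = 0 then c 0 else ttf c x n" and v = "\<lambda>h n. uu (real n * h)" and V = 41])
  show "(\<lambda>N. \<Sum>n<Suc N. if n = 0 then c 0 else ttf c x n) \<longlonglongrightarrow> f x"
    unfolding partial_sum_eq by (rule conv)
  show "\<And>h. uu (real 0 * h) = 1" by (simp add: uu_def)
  show "\<And>h n. \<bar>uu (real n * h)\<bar> \<le> 1" using uu_bounds by (metis abs_of_nonneg)
  show "\<And>h N. h \<noteq> 0 \<Longrightarrow> (\<Sum>n<N. \<bar>uu (real n * h) - uu (real (Suc n) * h)\<bar>) \<le> 41" by (rule uu_tv)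
  show "\<And>n. ((\<lambda>h. uu (real n * h)) \<longlongrightarrow> 1) (at 0)" by (rule uu_lim_n)
  fix h :: real assume h: "h \<noteq> 0"
  let ?a = "\<lambda>n. if n = 0 then c 0 else ttf c x n"
  have S1: "(\<lambda>n. tau c n (x+h) + tau c n (x-h) - 2 * tau c n x) sums (Ps c (x+h) + Ps c (x-h) - 2 * Ps c x)"
    by (intro sums_diff sums_add sums_mult Ps_sums[OF B])
  then have S2: "(\<lambda>n. - (if n = 0 then 0 else ttf c x n * of_real (uu (real n * h)) * of_real (h^2))) sums (Ps c (x+h) + Ps c (x-h) - 2 * Ps c x)"
    unfolding tau_second_diff .
  then have S3: "(\<lambda>n. if n = 0 then 0 else ttf c x n * of_real (uu (real n * h)) * of_real (h^2)) sums (- (Ps c (x+h) + Ps c (x-h) - 2 * Ps c x))"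
    using sums_minus by fastforce
  have S4: "(\<lambda>n. if n = 0 then c 0 * of_real (h^2) else 0) sums (c 0 * of_real (h^2))"
    using sums_single[of 0 "\<lambda>_. c 0 * of_real (h^2)"] by simp
  have S5: "(\<lambda>n. (if n = 0 then c 0 * of_real (h^2) else 0) + (if n = 0 then 0 else ttf c x n * of_real (uu (real n * h)) * of_real (h^2)))
       sums (c 0 * of_real (h^2) + - (Ps c (x+h) + Ps c (x-h) - 2 * Ps c x))"
    by (rule sums_add[OF S4 S3])
  have e1: "(\<lambda>n. (if n = 0 then c 0 * of_real (h^2) else 0) + (if n = 0 then 0 else ttf c x n * of_real (uu (real n * h)) * of_real (h^2)))
      = (\<lambda>n. ?a n * of_real (uu (real n * h)) * of_real (h^2))"
    by (rule ext) (simp add: uu_def)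
  have e2: "c 0 * of_real (h^2) + - (Ps c (x+h) + Ps c (x-h) - 2 * Ps c x) = FF c (x+h) + FF c (x-h) - 2 * FF c x"
    unfolding FF_def by (simp add: field_simps power2_eq_square)
  have S6: "(\<lambda>n. ?a n * of_real (uu (real n * h)) * of_real (h^2) / of_real (h^2)) sums ((FF c (x+h) + FF c (x-h) - 2 * FF c x) / of_real (h^2))"
    using sums_divide[OF S5[unfolded e1 e2]] .
  moreover have "(\<lambda>n. ?a n * of_real (uu (real n * h)) * of_real (h^2) / of_real (h^2)) = (\<lambda>n. ?a n * of_real (uu (real n * h)))"
    using h by (intro ext) simp
  ultimately show "(\<lambda>n. ?a n * of_real (uu (real n * h))) sums ((FF c (x+h) + FF c (x-h) - 2 * FF c x) / of_real (h^2))"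
    by simp
qed

lemma tau_int:
  assumes m: "m \<noteq> 0"
  shows "((\<lambda>y. tau c n y * exp (\<i> * of_int (-m) * of_real y)) has_integral
           (if int n = \<bar>m\<bar> then of_real (2*pi) * c m / of_int (m^2) else 0)) {0..2*pi}"
proof (cases "n = 0")
  case True then show ?thesis using m by (simp add: tau_def)
next
  case False
  have eq: "tau c n y * exp (\<i> * of_int (-m) * of_real y) =
      (c (int n) / of_nat (n^2)) * exp (\<i> * of_int (int n - m) * of_real y) + (c (- int n) / of_nat (n^2)) * exp (\<i> * of_int (- int n - m) * of_real y)" for y
  proof -
    have "tau c n y * exp (\<i> * of_int (-m) * of_real y) = (c (int n) * (exp (\<i> * of_int (int n) * of_real y) * exp (\<i> * of_int (-m) * of_real y)) +
        c (- int n) * (exp (\<i> * of_int (- int n) * of_real y) * exp (\<i> * of_int (-m) * of_real y))) / of_nat (n^2)"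
      using False unfolding tau_def ttf_def by (simp add: algebra_simps)
    also have "\<dots> = (c (int n) / of_nat (n^2)) * exp (\<i> * of_int (int n - m) * of_real y) + (c (- int n) / of_nat (n^2)) * exp (\<i> * of_int (- int n - m) * of_real y)"
      unfolding exp_ix_mult by (simp add: add_divide_distrib)
    finally show ?thesis .
  qed
  have "((\<lambda>y. (c (int n) / of_nat (n^2)) * exp (\<i> * of_int (int n - m) * of_real y) + (c (- int n) / of_nat (n^2)) * exp (\<i> * of_int (- int n - m) * of_real y))
     has_integral ((c (int n) / of_nat (n^2)) * (if int n - m = 0 then of_real (2*pi) else 0) + (c (- int n) / of_nat (n^2)) * (if - int n - m = 0 then of_real (2*pi) else 0))) {0..2*pi}"
    by (intro has_integral_add has_integral_mult_right int_exp)
  also have "((c (int n) / of_nat (n^2)) * (if int n - m = 0 then of_real (2*pi) else 0) + (c (- int n) / of_nat (n^2)) * (if - int n - m = 0 then of_real (2*pi) else 0))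
      = (if int n = \<bar>m\<bar> then of_real (2*pi) * c m / of_int (m^2) else 0)"
  proof -
    consider "int n = m" | "int n = - m" | "int n \<noteq> \<bar>m\<bar>" by linarith
    then show ?thesis
    proof cases
      case 1
      then have "m > 0" using False by simp
      moreover have "of_nat (n^2) = (of_int (m^2) :: complex)" unfolding 1[symmetric] by simp
      ultimately show ?thesis using 1 by simp
    next
      case 2
      then have "m < 0" using False by simp
      moreover have "of_nat (n^2) = (of_int (m^2) :: complex)"
      proof -
        have mm: "m = - int n" using 2 by linarith
        show ?thesis unfolding mm by simp
      qed
      moreover have "c (- int n) = c m" using 2 by simp
      ultimately show ?thesis using 2 by simp
    next
      case 3
      then show ?thesis by auto
    qed
  qed
  finally show ?thesis unfolding eq .
qed

lemma Ps_int:
  assumes B: "\<And>j. cmod (c j) \<le> B" and m: "m \<noteq> 0"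
  shows "((\<lambda>y. Ps c y * exp (\<i> * of_int (-m) * of_real y)) has_integral (of_real (2*pi) * c m / of_int (m^2))) {0..2*pi}"
proof -
  define e where "e y = exp (\<i> * of_int (-m) * of_real y)" for y :: real
  define K where "K = of_real (2*pi) * c m / of_int (m^2)"
  have ne: "norm (e y) = 1" for y unfolding e_def by (rule cmod_exp_ix)
  have ul: "uniform_limit {0..2*pi} (\<lambda>N y. \<Sum>n<N. tau c n y * e y) (\<lambda>y. \<Sum>n. tau c n y * e y) sequentially"
    by (rule Weierstrass_m_test[OF _ summable_M[of B]]) (simp add: norm_mult ne tau_bound[OF B])
  have contN: "continuous_on {0..2*pi} (\<lambda>y. \<Sum>n<N. tau c n y * e y)" for N
    unfolding e_def by (intro continuous_intros continuous_on_subset[OF tau_cont]) auto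
  obtain I J where I: "\<And>N. ((\<lambda>y. \<Sum>n<N. tau c n y * e y) has_integral I N) {0..2*pi}"
    and J: "((\<lambda>y. \<Sum>n. tau c n y * e y) has_integral J) {0..2*pi}" and IJ: "I \<longlonglongrightarrow> J"
    using uniform_limit_integral[OF ul contN] by auto
  have IN: "I N = (\<Sum>n<N. if int n = \<bar>m\<bar> then K else 0)" for N
  proof -
    have "((\<lambda>y. \<Sum>n<N. tau c n y * e y) has_integral (\<Sum>n<N. if int n = \<bar>m\<bar> then K else 0)) {0..2*pi}"
      unfolding e_def K_def by (intro has_integral_sum tau_int m) auto
    then show ?thesis by (rule has_integral_unique[OF I[of N]])
  qed
  have "\<forall>\<^sub>F N in sequentially. I N = K"
  proof (rule eventually_sequentiallyI[of "Suc (nat \<bar>m\<bar>)"])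
    fix N assume N: "N \<ge> Suc (nat \<bar>m\<bar>)"
    have "(\<Sum>n<N. if int n = \<bar>m\<bar> then K else 0) = (\<Sum>n<N. if n = nat \<bar>m\<bar> then K else 0)"
      by (intro sum.cong refl) auto
    also have "\<dots> = K" using N by (simp add: sum.delta)
    finally show "I N = K" unfolding IN .
  qed
  then have "I \<longlonglongrightarrow> K" by (rule tendsto_eventually)
  then have "J = K" using IJ LIMSEQ_unique by blast
  moreover have "(\<lambda>y. \<Sum>n. tau c n y * e y) = (\<lambda>y. Ps c y * e y)"
    unfolding Ps_def by (intro ext suminf_mult2[symmetric] sums_summable[OF Ps_sums[OF B, unfolded Ps_def]])
  ultimately show ?thesis using J unfolding e_def K_def by simp
qed

lemma vd_linear: "((\<lambda>y. a * complex_of_real y) has_vector_derivative a) (at y within S)"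
proof -
  have "((\<lambda>w. a * w) has_field_derivative a) (at (complex_of_real y))" by (auto intro!: derivative_eq_intros)
  then show ?thesis by (rule has_vector_derivative_real_field)
qed

lemma vd_exp: "((\<lambda>y. exp (\<i> * of_int k * of_real y)) has_vector_derivative (\<i> * of_int k * exp (\<i> * of_int k * of_real y))) (at y within S)"
proof -
  have "((\<lambda>w. exp (\<i> * of_int k * w)) has_field_derivative (\<i> * of_int k * exp (\<i> * of_int k * complex_of_real y))) (at (complex_of_real y))"
    by (auto intro!: derivative_eq_intros)
  then show ?thesis by (rule has_vector_derivative_real_field)
qed

lemma fourier_main:
  fixes c :: "int \<Rightarrow> complex" and f :: "real \<Rightarrow> complex"
  assumes B: "\<And>j. cmod (c j) \<le> B"
    and conv: "\<And>x. (\<lambda>N. \<Sum>n = - int N..int N. c n * exp (\<i> * of_int n * of_real x)) \<longlonglongrightarrow> f x"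
    and cont: "continuous_on UNIV f"
  shows "((\<lambda>x. f x * exp (\<i> * of_int (-m) * of_real x)) has_integral of_real (2*pi) * c m) {0..2*pi}"
proof -
  define \<Phi>1 where "\<Phi>1 y = integral {-2..y} f" for y
  define \<Phi> where "\<Phi> y = integral {-2..y} \<Phi>1" for y
  have cf: "continuous_on {-2..10} f" using cont by (rule continuous_on_subset) simp
  have c\<Phi>1: "continuous_on {-2..10} \<Phi>1" unfolding \<Phi>1_def
    by (rule indefinite_integral_continuous_1[OF integrable_continuous_real[OF cf]])
  have c\<Phi>: "continuous_on {-2..10} \<Phi>" unfolding \<Phi>_def
    by (rule indefinite_integral_continuous_1[OF integrable_continuous_real[OF c\<Phi>1]])
  have d\<Phi>1: "(\<Phi>1 has_vector_derivative f y) (at y)" if "-2 < y" "y < 10" for y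
  proof -
    have "(\<Phi>1 has_vector_derivative f y) (at y within {-2..10})" unfolding \<Phi>1_def
      using that by (intro integral_has_vector_derivative cf) auto
    then have "(\<Phi>1 has_vector_derivative f y) (at y within {-2<..<10})" by (rule has_vector_derivative_within_subset) auto
    then show ?thesis using that by (subst (asm) has_vector_derivative_within_open) auto
  qed
  have d\<Phi>: "(\<Phi> has_vector_derivative \<Phi>1 y) (at y)" if "-2 < y" "y < 10" for y
  proof -
    have "(\<Phi> has_vector_derivative \<Phi>1 y) (at y within {-2..10})" unfolding \<Phi>_def
      using that by (intro integral_has_vector_derivative c\<Phi>1) auto
    then have "(\<Phi> has_vector_derivative \<Phi>1 y) (at y within {-2<..<10})" by (rule has_vector_derivative_within_subset) auto
    then show ?thesis using that by (subst (asm) has_vector_derivative_within_open) auto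
  qed
  define G where "G y = FF c y - \<Phi> y" for y
  have cFF: "continuous_on UNIV (FF c)" unfolding FF_def by (intro continuous_intros Ps_cont[OF B]) auto
  have cG: "continuous_on {-1..9} G" unfolding G_def
    by (intro continuous_intros continuous_on_subset[OF cFF] continuous_on_subset[OF c\<Phi>]) auto
  have qG: "((\<lambda>h. (G (x+h) + G (x-h) - 2 * G x) / of_real (h^2)) \<longlongrightarrow> 0) (at 0)" if x: "-1 < x" "x < 9" for x
  proof -
    have 1: "((\<lambda>h. (\<Phi> (x+h) + \<Phi> (x-h) - 2 * \<Phi> x) / of_real (h^2)) \<longlongrightarrow> f x) (at 0)"
    proof (rule second_diff_lim[where d = 1])
      show "\<And>y. \<bar>y - x\<bar> < 1 \<Longrightarrow> (\<Phi> has_vector_derivative \<Phi>1 y) (at y)" using x by (intro d\<Phi>) auto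
      show "(\<Phi>1 has_vector_derivative f x) (at x)" using x by (intro d\<Phi>1) auto
    qed simp
    have 2: "((\<lambda>h. (FF c (x+h) + FF c (x-h) - 2 * FF c x) / of_real (h^2)) \<longlongrightarrow> f x) (at 0)"
      by (rule riemann[OF B conv])
    have "((\<lambda>h. (FF c (x+h) + FF c (x-h) - 2 * FF c x) / of_real (h^2) - (\<Phi> (x+h) + \<Phi> (x-h) - 2 * \<Phi> x) / of_real (h^2)) \<longlongrightarrow> f x - f x) (at 0)"
      by (rule tendsto_diff[OF 2 1])
    moreover have "(FF c (x+h) + FF c (x-h) - 2 * FF c x) / of_real (h^2) - (\<Phi> (x+h) + \<Phi> (x-h) - 2 * \<Phi> x) / of_real (h^2)
        = (G (x+h) + G (x-h) - 2 * G x) / of_real (h^2)" for h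
      unfolding G_def by (simp add: diff_divide_distrib[symmetric] algebra_simps)
    ultimately show ?thesis by simp
  qed
  have Gaff: "G y = G (-1) + of_real ((y - -1) / (9 - -1)) * (G 9 - G (-1))" if "y \<in> {-1..9}" for y
    by (rule schwarz_affine[OF _ cG qG that]) auto
  define \<beta> where "\<beta> = (G 9 - G (-1)) / 10"
  define q where "q w = c 0 * w^2 / 2 - (G (-1) + (w + 1) / 10 * (G 9 - G (-1)))" for w :: complex
  define D where "D y = c 0 * of_real y - \<beta> - \<Phi>1 y" for y
  have Pseq: "Ps c z = q (of_real z) - \<Phi> z" if "z \<in> {-1<..<9}" for z
  proof -
    have "G z = G (-1) + of_real ((z - -1) / (9 - -1)) * (G 9 - G (-1))" using that by (intro Gaff) auto
    then have g: "G z = G (-1) + (of_real z + 1) / 10 * (G 9 - G (-1))" by simp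
    have "Ps c z = c 0 * of_real (z^2) / 2 - \<Phi> z - G z" unfolding G_def FF_def by (simp add: algebra_simps)
    also have "\<dots> = q (of_real z) - \<Phi> z" unfolding g q_def by (simp add: algebra_simps)
    finally show ?thesis .
  qed
  have Psd: "(Ps c has_vector_derivative D y) (at y)" if y: "-1 < y" "y < 9" for y
  proof -
    have "((\<lambda>z. q (of_real z)) has_vector_derivative (c 0 * of_real y - \<beta>)) (at y)"
    proof (rule has_vector_derivative_real_field)
      show "(q has_field_derivative c 0 * complex_of_real y - \<beta>) (at (complex_of_real y))"
        unfolding q_def \<beta>_def by (auto intro!: derivative_eq_intros simp: field_simps)
    qed
    then have "((\<lambda>z. q (of_real z) - \<Phi> z) has_vector_derivative (c 0 * of_real y - \<beta> - \<Phi>1 y)) (at y)"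
      using y by (intro has_vector_derivative_diff d\<Phi>) auto
    then show ?thesis unfolding D_def
      by (rule has_vector_derivative_transform_within_open[where S = "{-1<..<9}"]) (use y Pseq in auto)
  qed
  have Dd: "(D has_vector_derivative (c 0 - f y)) (at y)" if y: "-1 < y" "y < 9" for y
  proof -
    have "(D has_vector_derivative (c 0 - 0 - f y)) (at y)"
      unfolding D_def using y by (intro has_vector_derivative_diff vd_linear has_vector_derivative_const d\<Phi>1) auto
    then show ?thesis by simp
  qed
  have pi9: "2 * pi < 9" using pi_less_4 by simp
  have D2pi: "D (2*pi) = D 0"
  proof -
    have "((\<lambda>s. s + 2*pi) has_vector_derivative 1) (at 0)" by (auto intro!: derivative_eq_intros)
    moreover have "(Ps c has_vector_derivative D (2*pi)) (at (2*pi))" by (rule Psd) (use pi9 pi_gt_zero in linarith)+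
    then have "(Ps c has_vector_derivative D (2*pi)) (at (0 + 2*pi))" by simp
    ultimately have "((Ps c \<circ> (\<lambda>s. s + 2*pi)) has_vector_derivative 1 *\<^sub>R D (2*pi)) (at 0)"
      by (rule vector_diff_chain_at)
    moreover have "Ps c \<circ> (\<lambda>s. s + 2*pi) = Ps c" by (rule ext) (simp add: Ps_per[OF B])
    ultimately have "(Ps c has_vector_derivative D (2*pi)) (at 0)" by simp
    moreover have "(Ps c has_vector_derivative D 0) (at 0)" by (intro Psd) auto
    ultimately show ?thesis by (rule vector_derivative_unique_at)
  qed
  define e where "e y = exp (\<i> * of_int (-m) * of_real y)" for y
  define R where "R y = (D y + \<i> * of_int m * Ps c y) * e y" for y
  have Rd: "(R has_vector_derivative ((c 0 - f y + of_int (m^2) * Ps c y) * e y)) (at y within {0..2*pi})"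
    if y: "y \<in> {0..2*pi}" for y
  proof -
    have y': "-1 < y" "y < 9" using y pi9 by auto
    have A: "(R has_vector_derivative ((D y + \<i> * of_int m * Ps c y) * (\<i> * of_int (-m) * e y) + ((c 0 - f y) + \<i> * of_int m * D y) * e y)) (at y)"
      unfolding R_def e_def
      by (intro has_vector_derivative_mult has_vector_derivative_add has_vector_derivative_mult_right Dd Psd vd_exp y')
    have EQ: "(D y + \<i> * of_int m * Ps c y) * (\<i> * of_int (-m) * e y) + ((c 0 - f y) + \<i> * of_int m * D y) * e y
        = (c 0 - f y + of_int (m^2) * Ps c y) * e y"
      by (simp add: algebra_simps power2_eq_square)
    show ?thesis using A[unfolded EQ] by (rule has_vector_derivative_at_within)
  qed
  have "((\<lambda>y. (c 0 - f y + of_int (m^2) * Ps c y) * e y) has_integral (R (2*pi) - R 0)) {0..2*pi}"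
    by (rule fundamental_theorem_of_calculus) (use Rd in auto)
  moreover have "R (2*pi) = R 0"
    unfolding R_def D2pi using Ps_per[OF B, where y=0] exp_2pi[of "-m"] by (simp add: e_def)
  ultimately have I0: "((\<lambda>y. (c 0 - f y + of_int (m^2) * Ps c y) * e y) has_integral 0) {0..2*pi}" by simp
  have cPse: "continuous_on {0..2*pi} (\<lambda>y. Ps c y * e y)"
    unfolding e_def by (intro continuous_intros continuous_on_subset[OF Ps_cont[OF B]]) auto
  define J where "J = integral {0..2*pi} (\<lambda>y. Ps c y * e y)"
  have IJ: "((\<lambda>y. Ps c y * e y) has_integral J) {0..2*pi}"
    unfolding J_def by (rule integrable_integral[OF integrable_continuous_real[OF cPse]])
  have Ie: "(e has_integral (if -m = 0 then of_real (2*pi) else 0)) {0..2*pi}"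
    unfolding e_def by (rule int_exp)
  have "((\<lambda>y. c 0 * e y + of_int (m^2) * (Ps c y * e y) - (c 0 - f y + of_int (m^2) * Ps c y) * e y) has_integral
      (c 0 * (if -m = 0 then of_real (2*pi) else 0) + of_int (m^2) * J - 0)) {0..2*pi}"
    by (intro has_integral_diff has_integral_add has_integral_mult_right Ie IJ I0)
  moreover have "(\<lambda>y. c 0 * e y + of_int (m^2) * (Ps c y * e y) - (c 0 - f y + of_int (m^2) * Ps c y) * e y) = (\<lambda>y. f y * e y)"
    by (rule ext) (simp add: algebra_simps)
  moreover have "c 0 * (if -m = 0 then of_real (2*pi) else 0) + of_int (m^2) * J - 0 = of_real (2*pi) * c m"
  proof (cases "m = 0")
    case True then show ?thesis by simp
  next
    case False
    have "J = of_real (2*pi) * c m / of_int (m^2)"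
      by (rule has_integral_unique[OF IJ[unfolded e_def] Ps_int[where c = c and m = m, OF B False]])
    then show ?thesis using False by simp
  qed
  ultimately show ?thesis unfolding e_def by simp
qed

theorem lemma3:
  fixes c :: "int \<Rightarrow> complex" and f :: "real \<Rightarrow> complex"
  assumes "NBVS (\<lambda>n. c (int n))"
    and "NBVS (\<lambda>n. c (int n) + c (- int n))"
    and "\<And>x. (\<lambda>N. \<Sum>n = - int N..int N. c n * exp (\<i> * of_int n * of_real x)) \<longlonglongrightarrow> f x"
    and "continuous_on UNIV f"
  shows "\<exists>K. \<forall>n\<ge>1. \<forall>k\<ge>1.
           real k * cmod (c (int n + int k)) \<le> K * best_approx n f \<and>
           real k * cmod (c (- int n - int k)) \<le> K * best_approx n f"
proof -
  obtain B where B: "\<And>j. cmod (c j) \<le> B" using coef_bounded[OF assms(1) assms(3)] by blast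
  obtain Mf where Mf: "\<And>x. cmod (f x) \<le> Mf" using f_bounded[OF assms(3,4)] by blast
  have four: "\<And>j. ((\<lambda>x. f x * exp (\<i> * of_int (-j) * of_real x)) has_integral of_real (2*pi) * c j) {0..2*pi}"
    by (rule fourier_main[OF B assms(3,4)])
  note key1 = key2[OF four assms(4) Mf]
  obtain C1 where C1: "C1 \<ge> 0" and C1h: "\<And>n lam E. n \<ge> 1 \<Longrightarrow>
     (\<forall>k p. k \<ge> 1 \<longrightarrow> p \<ge> n + k \<longrightarrow> cmod (\<Sum>a<k. \<Sum>b<k. c (int (p + a - b))) \<le> lam * real k * E) \<Longrightarrow>
     (\<forall>k\<ge>1. real k * cmod (c (int (n + k))) \<le> C1 * lam * E)"
    using comb[OF assms(1)] by blast
  obtain C2 where C2: "C2 \<ge> 0" and C2h: "\<And>n lam E. n \<ge> 1 \<Longrightarrow>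
     (\<forall>k p. k \<ge> 1 \<longrightarrow> p \<ge> n + k \<longrightarrow> cmod (\<Sum>a<k. \<Sum>b<k. c (int (p + a - b)) + c (- int (p + a - b))) \<le> lam * real k * E) \<Longrightarrow>
     (\<forall>k\<ge>1. real k * cmod (c (int (n + k)) + c (- int (n + k))) \<le> C2 * lam * E)"
    using comb[OF assms(2)] by blast
  show ?thesis
  proof (intro exI allI impI conjI)
    fix n k :: nat assume n: "n \<ge> 1" and k: "k \<ge> 1"
    let ?E = "best_approx n f"
    have idx: "int (p + a - b) = int p + int a - int b" if "p \<ge> n + k'" "b < k'" for p a b k' :: nat
      using that by auto
    have h1: "\<forall>k p. k \<ge> 1 \<longrightarrow> p \<ge> n + k \<longrightarrow> cmod (\<Sum>a<k. \<Sum>b<k. c (int (p + a - b))) \<le> 1 * real k * ?E"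
    proof (intro allI impI)
      fix k' p :: nat assume "k' \<ge> 1" "p \<ge> n + k'"
      have "(\<Sum>a<k'. \<Sum>b<k'. c (int (p + a - b))) = (\<Sum>a<k'. \<Sum>b<k'. c (1 * (int p + int a - int b)))"
        using \<open>p \<ge> n + k'\<close> by (intro sum.cong refl) (auto simp: of_nat_diff)
      then show "cmod (\<Sum>a<k'. \<Sum>b<k'. c (int (p + a - b))) \<le> 1 * real k' * ?E"
        using key1[of 1 k' n p] \<open>k' \<ge> 1\<close> \<open>p \<ge> n + k'\<close> by simp
    qed
    have h2: "\<forall>k p. k \<ge> 1 \<longrightarrow> p \<ge> n + k \<longrightarrow> cmod (\<Sum>a<k. \<Sum>b<k. c (int (p + a - b)) + c (- int (p + a - b))) \<le> 2 * real k * ?E"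
    proof (intro allI impI)
      fix k' p :: nat assume "k' \<ge> 1" "p \<ge> n + k'"
      have "(\<Sum>a<k'. \<Sum>b<k'. c (int (p + a - b)) + c (- int (p + a - b))) = 
         (\<Sum>a<k'. \<Sum>b<k'. c (1 * (int p + int a - int b))) + (\<Sum>a<k'. \<Sum>b<k'. c ((-1) * (int p + int a - int b)))"
        using \<open>p \<ge> n + k'\<close> by (auto simp: of_nat_diff sum.distrib intro!: sum.cong)
      also have "cmod \<dots> \<le> real k' * ?E + real k' * ?E"
        using key1[of 1 k' n p] key1[of "-1" k' n p] \<open>k' \<ge> 1\<close> \<open>p \<ge> n + k'\<close>
        by (intro order.trans[OF norm_triangle_ineq] add_mono) auto
      finally show "cmod (\<Sum>a<k'. \<Sum>b<k'. c (int (p + a - b)) + c (- int (p + a - b))) \<le> 2 * real k' * ?E"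
        by simp
    qed
    have E0: "0 \<le> ?E"
      using key1[of 1 1 n "n+1"] by (auto intro: order.trans[OF norm_ge_zero])
    have r1: "real k * cmod (c (int (n + k))) \<le> C1 * 1 * ?E" using C1h[OF n h1] k by blast
    have r2: "real k * cmod (c (int (n + k)) + c (- int (n + k))) \<le> C2 * 2 * ?E" using C2h[OF n h2] k by blast
    show "real k * cmod (c (int n + int k)) \<le> (C1 + 2 * C2) * ?E"
      using r1 C2 E0 by (simp add: algebra_simps) (smt (verit) mult_nonneg_nonneg)
    have eqc: "c (- int (n+k)) = (c (int (n + k)) + c (- int (n + k))) - c (int (n + k))" by simp
    have "cmod (c (- int (n+k))) \<le> cmod (c (int (n + k)) + c (- int (n + k))) + cmod (c (int (n + k)))"
      by (subst eqc) (rule norm_triangle_ineq4)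
    moreover have eq2: "c (- int n - int k) = c (- int (n+k))" by simp
    ultimately have "cmod (c (- int n - int k)) \<le> cmod (c (int (n + k)) + c (- int (n + k))) + cmod (c (int (n + k)))"
      by (simp only: eq2)
    then have "real k * cmod (c (- int n - int k)) \<le> real k * cmod (c (int (n + k)) + c (- int (n + k))) + real k * cmod (c (int (n + k)))"
      by (metis distrib_left mult_left_mono of_nat_0_le_iff)
    then show "real k * cmod (c (- int n - int k)) \<le> (C1 + 2 * C2) * ?E"
      using r1 r2 by (simp add: algebra_simps)
  qed
qed

end
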